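(* Let $f_1:\mathbb{R}^m\to(-\infty,+\infty]$ be proper convex lower semi-continuous, let $B\in\mathbb{R}^{m\times d}$ have full row rank, and let $f_2(x)=\frac1n\sum_{i=1}^n\phi_i(x)$ with each $\phi_i:\mathbb{R}^d\to\mathbb{R}$ smooth and convex, $f_2$ being $\nu$-strongly convex ($\nu>0$) with $\frac1\beta$-Lipschitz gradient ($\beta>0$). Let $x^*$ be a minimizer of $f_1(Bx)+f_2(x)$ and $v^*\in\mathbb{R}^m$ such that for every $k$, with $h_k(x)=\frac{\lambda}{\gamma_k}f_1(\frac{\gamma_k}{\lambda}x)$, $$v^*=(I-\mathrm{Prox}_{h_k})\Big(\tfrac{\lambda}{\gamma_k}B\big(x^*-\gamma_k\nabla f_2(x^* )\big)+(I-\lambda BB^T)v^*\Big),\qquad x^*=x^*-\gamma_k\nabla f_2(x^* )-\gamma_kB^Tv^*.$$ Let $(x_k,v_k)$ be generated by Algorithm 1 (described in the context) with $c>0$, $\alpha\in(0,1]$, $0<\lambda<1/\rho_{\max}(BB^T)$, and assume there exist $C_1,C_2>0$ such that for all $k$, $\mathbb{E}^{(k+1)}\big(\|\nabla f_2^{[i_k]}(x_k)-\nabla f_2(x_k)\|_2^2\big)\le C_1\mathbb{E}^{(k)}(\|x_k\|_2^2)+C_2$. Let $k_0>0$ be an integer with $\gamma_{k_0}\le\min\{\frac{\beta\nu}{2(\nu+2C_1\beta)},\frac{\lambda\rho_{\min}(BB^T)}{\nu}\}$. Then, with $a_k=\mathbb{E}^{(k)}\big(\|x_k-x^*\|_2^2+\frac{\gamma_k^2}{\lambda}\|v_k-v^*\|_2^2\big)$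 and $M_1=4C_1\|x^*\|_2^2+2C_2$, $$a_{k+1}\le(1-\nu\gamma_k)a_k+\gamma_k^2M_1\qquad\forall k\ge k_0.$$
   Context: $\mathrm{Prox}_f(y)=\arg\min_x\{f(x)+\frac12\|x-y\|_2^2\}$; $\rho_{\max}(BB^T),\rho_{\min}(BB^T)$ are the largest and smallest eigenvalues of $BB^T$. Fix a batch size $p$ dividing $n$; for $i\in\{1,\dots,n/p\}$, $\nabla f_2^{[i]}(x)=\frac1p\sum_{j=(i-1)p+1}^{ip}\nabla\phi_j(x)$. Algorithm 1: choose $x_1\in\mathbb{R}^d$, $v_1\in\mathbb{R}^m$; for $k=1,2,\dots$: $\gamma_k=c/k^\alpha$; draw $i_k$ from $\{1,\dots,n/p\}$, each with probability $p/n$, independently of the past; $x_{k+1/2}=x_k-\gamma_k\nabla f_2^{[i_k]}(x_k)$; $v_{k+1}=\frac{\lambda}{\gamma_k}\big(I-\mathrm{Prox}_{\frac{\gamma_k}{\lambda}f_1}\big)\big(Bx_{k+1/2}+(I-\lambda BB^T)\frac{\gamma_k}{\lambda}v_k\big)$; $x_{k+1}=x_{k+1/2}-\gamma_kB^Tv_{k+1}$. $\mathbb{E}^{(k)}$ denotes expectation with respect to all random indices drawn up to the $k$-th iterate. *)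

theory Defs
  imports "HOL-Analysis.Analysis" "HOL-Probability.Probability"
begin

definition proper_fun :: "('a \<Rightarrow> ereal) \<Rightarrow> bool" where
  "proper_fun f \<longleftrightarrow> (\<forall>x. f x \<noteq> -\<infinity>) \<and> (\<exists>x. f x \<noteq> \<infinity>)"

(* convexity of an extended-real valued function (convention 0 * \<infinity> = 0) *)
definition ereal_convex :: "('a::real_vector \<Rightarrow> ereal) \<Rightarrow> bool" where
  "ereal_convex f \<longleftrightarrow> (\<forall>x y t. 0 \<le> t \<and> t \<le> 1 \<longrightarrow>
      f ((1 - t) *\<^sub>R x + t *\<^sub>R y) \<le> ereal (1 - t) * f x + ereal t * f y)"

definition lsc_fun :: "('a::topological_space \<Rightarrow> ereal) \<Rightarrow> bool" where
  "lsc_fun f \<longleftrightarrow> (\<forall>x. f x \<le> Liminf (at x) f)"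

definition strongly_convex :: "real \<Rightarrow> ('a::real_normed_vector \<Rightarrow> real) \<Rightarrow> bool" where
  "strongly_convex \<nu> f \<longleftrightarrow> (\<forall>x y t. 0 \<le> t \<and> t \<le> 1 \<longrightarrow>
      f ((1 - t) *\<^sub>R x + t *\<^sub>R y) \<le> (1 - t) * f x + t * f y - \<nu> / 2 * t * (1 - t) * (norm (x - y))\<^sup>2)"

definition prox :: "('a::real_normed_vector \<Rightarrow> ereal) \<Rightarrow> 'a \<Rightarrow> 'a" where
  "prox g y = (SOME x. \<forall>z. g x + ereal ((norm (x - y))\<^sup>2 / 2) \<le> g z + ereal ((norm (z - y))\<^sup>2 / 2))"

definition eigvals :: "real^'n^'n \<Rightarrow> real set" where
  "eigvals A = {c. \<exists>v. v \<noteq> 0 \<and> A *v v = c *\<^sub>R v}"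

definition rho_max :: "real^'n^'n \<Rightarrow> real" where "rho_max A = Max (eigvals A)"
definition rho_min :: "real^'n^'n \<Rightarrow> real" where "rho_min A = Min (eigvals A)"

definition stepsize :: "real \<Rightarrow> real \<Rightarrow> nat \<Rightarrow> real" where
  "stepsize c \<alpha> k = c / (real k powr \<alpha>)"

definition batch_grad :: "nat \<Rightarrow> (nat \<Rightarrow> real^'d \<Rightarrow> real^'d) \<Rightarrow> nat \<Rightarrow> real^'d \<Rightarrow> real^'d" where
  "batch_grad p g i x = (1 / real p) *\<^sub>R (\<Sum>j=(i-1)*p+1..i*p. g j x)"

(* one iteration k of Algorithm 1, with index i = i_k *)
definition alg_step ::
  "(real^'m \<Rightarrow> ereal) \<Rightarrow> real^'d^'m \<Rightarrow> nat \<Rightarrow> (nat \<Rightarrow> real^'d \<Rightarrow> real^'d) \<Rightarrow> real \<Rightarrow> real \<Rightarrow> real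
    \<Rightarrow> nat \<Rightarrow> nat \<Rightarrow> (real^'d) \<times> (real^'m) \<Rightarrow> (real^'d) \<times> (real^'m)" where
  "alg_step f1 B p g c \<alpha> lam k i xv =
     (let x = fst xv; v = snd xv; \<gamma> = stepsize c \<alpha> k;
          xh = x - \<gamma> *\<^sub>R batch_grad p g i x;
          y = B *v xh + (mat 1 - lam *\<^sub>R (B ** transpose B)) *v ((\<gamma> / lam) *\<^sub>R v);
          v' = (lam / \<gamma>) *\<^sub>R (y - prox (\<lambda>z. ereal (\<gamma> / lam) * f1 z) y);
          x' = xh - \<gamma> *\<^sub>R (transpose B *v v')
      in (x', v'))"

(* alg ... \<omega> k = (x_k, v_k) for k \<ge> 1, where \<omega> j = i_j; alg ... 0 is unused *)
fun alg ::
  "(real^'m \<Rightarrow> ereal) \<Rightarrow> real^'d^'m \<Rightarrow> nat \<Rightarrow> (nat \<Rightarrow> real^'d \<Rightarrow> real^'d) \<Rightarrow> real \<Rightarrow> real \<Rightarrow> real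
    \<Rightarrow> real^'d \<Rightarrow> real^'m \<Rightarrow> (nat \<Rightarrow> nat) \<Rightarrow> nat \<Rightarrow> (real^'d) \<times> (real^'m)" where
  "alg f1 B p g c \<alpha> lam x1 v1 \<omega> 0 = (x1, v1)"
| "alg f1 B p g c \<alpha> lam x1 v1 \<omega> (Suc k) =
     (if k = 0 then (x1, v1)
      else alg_step f1 B p g c \<alpha> lam k (\<omega> k) (alg f1 B p g c \<alpha> lam x1 v1 \<omega> k))"

(* E^{(k)}: expectation over the independent uniform indices i_1, ..., i_{k-1}
   (each uniform on {1..n/p}), i.e. all indices drawn before the k-th iterate *)
definition Ek :: "nat \<Rightarrow> nat \<Rightarrow> nat \<Rightarrow> ((nat \<Rightarrow> nat) \<Rightarrow> real) \<Rightarrow> real" where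
  "Ek n p k F = measure_pmf.expectation (Pi_pmf {1..<k} 1 (\<lambda>_. pmf_of_set {1..n div p})) F"

end

theory Submission
  imports Defs
begin


lemma line_deriv:
  fixes f :: "'a::real_inner \<Rightarrow> real"
  assumes "\<And>x. (f has_derivative (\<lambda>h. G x \<bullet> h)) (at x)"
  shows "((\<lambda>t. f (x + t *\<^sub>R u)) has_real_derivative (G (x + t *\<^sub>R u) \<bullet> u)) (at t)"
proof -
  have l: "((\<lambda>t. x + t *\<^sub>R u) has_derivative (\<lambda>t. t *\<^sub>R u)) (at t)"
    by (auto intro!: derivative_eq_intros)
  have "((\<lambda>t. f (x + t *\<^sub>R u)) has_derivative (\<lambda>s. G (x + t *\<^sub>R u) \<bullet> (s *\<^sub>R u))) (at t)"
    using has_derivative_compose[OF l assms] by simp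
  then show ?thesis unfolding has_field_derivative_def
    by (rule has_derivative_eq_rhs) (auto simp: fun_eq_iff inner_scaleR_right)
qed

lemma sgi:
  fixes f :: "'a::real_inner \<Rightarrow> real"
  assumes d: "\<And>x. (f has_derivative (\<lambda>h. G x \<bullet> h)) (at x)"
    and sc: "strongly_convex \<nu> f"
  shows "f y \<ge> f x + G x \<bullet> (y - x) + \<nu> / 2 * (norm (y - x))\<^sup>2"
proof -
  have D: "((\<lambda>t. f (x + t *\<^sub>R (y - x))) has_real_derivative (G x \<bullet> (y - x))) (at 0)"
    using line_deriv[OF d, where x=x and t=0 and u="y - x"] by simp
  then have lim: "((\<lambda>t. (f (x + t *\<^sub>R (y - x)) - f x) / t) \<longlongrightarrow> G x \<bullet> (y - x)) (at 0)"
    by (simp add: has_field_derivative_iff)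
  then have lim': "((\<lambda>t. (f (x + t *\<^sub>R (y - x)) - f x) / t) \<longlongrightarrow> G x \<bullet> (y - x)) (at_right 0)"
    by (rule filterlim_mono) (auto simp: at_le)
  have lim2: "((\<lambda>t. f y - f x - \<nu> / 2 * (1 - t) * (norm (x - y))\<^sup>2) \<longlongrightarrow> f y - f x - \<nu> / 2 * (1 - 0) * (norm (x - y))\<^sup>2) (at_right 0)"
    by (intro tendsto_intros)
  have ev: "\<forall>\<^sub>F t in at_right 0. (f (x + t *\<^sub>R (y - x)) - f x) / t \<le> f y - f x - \<nu> / 2 * (1 - t) * (norm (x - y))\<^sup>2"
    unfolding eventually_at_right_field
  proof (intro exI[of _ 1] conjI allI impI)
    fix t :: real assume t: "0 < t" "t < 1"
    have "f ((1 - t) *\<^sub>R x + t *\<^sub>R y) \<le> (1 - t) * f x + t * f y - \<nu> / 2 * t * (1 - t) * (norm (x - y))\<^sup>2"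
      using sc t unfolding strongly_convex_def by auto
    moreover have "(1 - t) *\<^sub>R x + t *\<^sub>R y = x + t *\<^sub>R (y - x)" by (simp add: algebra_simps)
    ultimately have "f (x + t *\<^sub>R (y - x)) - f x \<le> t * (f y - f x - \<nu> / 2 * (1 - t) * (norm (x - y))\<^sup>2)"
      by (simp add: algebra_simps)
    then show "(f (x + t *\<^sub>R (y - x)) - f x) / t \<le> f y - f x - \<nu> / 2 * (1 - t) * (norm (x - y))\<^sup>2"
      using t by (simp add: divide_simps mult.commute)
  qed simp
  have "G x \<bullet> (y - x) \<le> f y - f x - \<nu> / 2 * (1 - 0) * (norm (x - y))\<^sup>2"
    by (rule tendsto_le[OF _ lim2 lim' ev]) simp
  then show ?thesis by (simp add: norm_minus_commute)
qed

lemma descent: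
  fixes f :: "'a::real_inner \<Rightarrow> real"
  assumes d: "\<And>x. (f has_derivative (\<lambda>h. G x \<bullet> h)) (at x)"
    and L: "L-lipschitz_on UNIV G"
  shows "f z \<le> f y + G y \<bullet> (z - y) + L * (norm (z - y))\<^sup>2"
proof -
  define h where "h t = f (y + t *\<^sub>R (z - y)) - t * (G y \<bullet> (z - y))" for t
  have hd: "(h has_real_derivative ((G (y + t *\<^sub>R (z - y)) - G y) \<bullet> (z - y))) (at t)" for t
    unfolding h_def using line_deriv[OF d, where x=y and t=t and u="z - y"]
    by (auto intro!: derivative_eq_intros simp: inner_diff_left)
  obtain \<xi> where \<xi>: "0 < \<xi>" "\<xi> < 1" "h 1 - h 0 = (1 - 0) * ((G (y + \<xi> *\<^sub>R (z - y)) - G y) \<bullet> (z - y))"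
    using MVT2[of 0 1 h "\<lambda>t. (G (y + t *\<^sub>R (z - y)) - G y) \<bullet> (z - y)"] hd by auto
  have L0: "0 \<le> L" using L by (auto simp: lipschitz_on_def)
  have "(G (y + \<xi> *\<^sub>R (z - y)) - G y) \<bullet> (z - y) \<le> norm (G (y + \<xi> *\<^sub>R (z - y)) - G y) * norm (z - y)"
    by (rule norm_cauchy_schwarz)
  also have "norm (G (y + \<xi> *\<^sub>R (z - y)) - G y) \<le> L * norm ((y + \<xi> *\<^sub>R (z - y)) - y)"
    using L unfolding lipschitz_on_def dist_norm by blast
  then have "norm (G (y + \<xi> *\<^sub>R (z - y)) - G y) * norm (z - y) \<le> L * norm ((y + \<xi> *\<^sub>R (z - y)) - y) * norm (z - y)"
    by (simp add: mult_right_mono)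
  also have "L * norm ((y + \<xi> *\<^sub>R (z - y)) - y) * norm (z - y) = L * \<xi> * (norm (z - y))\<^sup>2"
    using \<xi> by (simp add: power2_eq_square)
  also have "\<dots> \<le> L * (norm (z - y))\<^sup>2"
    using \<xi> L0 by (simp add: mult_right_mono mult_left_le)
  finally have "h 1 - h 0 \<le> L * (norm (z - y))\<^sup>2" using \<xi> by simp
  then show ?thesis unfolding h_def by (simp add: algebra_simps)
qed

lemma cocoercive:
  fixes f :: "'a::real_inner \<Rightarrow> real"
  assumes d: "\<And>x. (f has_derivative (\<lambda>h. G x \<bullet> h)) (at x)"
    and cvx: "\<And>x y. f y \<ge> f x + G x \<bullet> (y - x)"
    and L: "L-lipschitz_on UNIV G" and Lp: "0 < L"
  shows "(G y - G x) \<bullet> (y - x) \<ge> (norm (G y - G x))\<^sup>2 / (2 * L)"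
proof -
  have one: "f b \<ge> f a + G a \<bullet> (b - a) + (norm (G b - G a))\<^sup>2 / (4 * L)" for a b
  proof -
    define g where "g = G b - G a"
    define s where "s = 1 / (2 * L)"
    define z where "z = b - s *\<^sub>R g"
    have c1: "f z \<ge> f a + G a \<bullet> (z - a)" by (rule cvx)
    have c2: "f z \<le> f b + G b \<bullet> (z - b) + L * (norm (z - b))\<^sup>2" by (rule descent[OF d L])
    have e1: "G a \<bullet> (z - a) = G a \<bullet> (b - a) - s * (G a \<bullet> g)"
      by (simp add: z_def algebra_simps inner_diff_right)
    have e2: "G b \<bullet> (z - b) = - s * (G b \<bullet> g)" by (simp add: z_def inner_diff_right)
    have e3: "(norm (z - b))\<^sup>2 = s\<^sup>2 * (norm g)\<^sup>2" by (simp add: z_def power_mult_distrib)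
    have e4: "G b \<bullet> g - G a \<bullet> g = (norm g)\<^sup>2" by (simp add: g_def power2_norm_eq_inner inner_diff_left)
    have "f a + G a \<bullet> (b - a) \<le> f b - s * (norm g)\<^sup>2 + L * s\<^sup>2 * (norm g)\<^sup>2"
      using c1 c2 e1 e2 e3 e4 by (simp add: algebra_simps)
    moreover have "- s * (norm g)\<^sup>2 + L * s\<^sup>2 * (norm g)\<^sup>2 = - (norm g)\<^sup>2 / (4 * L)"
      using Lp by (simp add: s_def field_simps power2_eq_square)
    ultimately show ?thesis by (simp add: g_def)
  qed
  have "f y \<ge> f x + G x \<bullet> (y - x) + (norm (G y - G x))\<^sup>2 / (4 * L)" by (rule one)
  moreover have "f x \<ge> f y + G y \<bullet> (x - y) + (norm (G x - G y))\<^sup>2 / (4 * L)" by (rule one)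
  moreover have "norm (G x - G y) = norm (G y - G x)" by (rule norm_minus_commute)
  moreover have "G y \<bullet> (x - y) = - (G y \<bullet> (y - x))" by (simp add: inner_diff_right)
  ultimately show ?thesis by (simp add: inner_diff_left field_simps)
qed


lemma sym_inner:
  fixes A :: "real^'n^'n"
  assumes "transpose A = A"
  shows "z \<bullet> (A *v w) = (A *v z) \<bullet> w"
proof -
  have "z \<bullet> (A *v w) = (z v* A) \<bullet> w" by (simp add: dot_lmul_matrix)
  also have "z v* A = transpose A *v z" by simp
  finally show ?thesis using assms by simp
qed

lemma eigvals_finite:
  fixes A :: "real^'n^'n"
  assumes sym: "transpose A = A"
  shows "finite (eigvals A)"
proof -
  define e where "e c = (SOME v. v \<noteq> 0 \<and> A *v v = c *\<^sub>R v)" for c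
  have e: "e c \<noteq> 0 \<and> A *v e c = c *\<^sub>R e c" if "c \<in> eigvals A" for c
    using that unfolding eigvals_def e_def by (rule CollectE) (rule someI_ex)
  have orth: "e c \<bullet> e d = 0" if "c \<in> eigvals A" "d \<in> eigvals A" "c \<noteq> d" for c d
  proof -
    have "c * (e c \<bullet> e d) = (A *v e c) \<bullet> e d" using e[OF that(1)] by simp
    also have "\<dots> = e c \<bullet> (A *v e d)" using sym_inner[OF sym] by simp
    also have "\<dots> = d * (e c \<bullet> e d)" using e[OF that(2)] by simp
    finally show ?thesis using that(3) by simp
  qed
  have inj: "inj_on e (eigvals A)"
  proof
    fix c d assume cd: "c \<in> eigvals A" "d \<in> eigvals A" "e c = e d"
    show "c = d"
    proof (rule ccontr)
      assume "c \<noteq> d"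
      then have "e c \<bullet> e c = 0" using orth[OF cd(1,2)] cd(3) by simp
      then show False using e[OF cd(1)] by simp
    qed
  qed
  have "pairwise orthogonal (e ` eigvals A)"
    unfolding pairwise_def orthogonal_def using orth by auto
  moreover have "0 \<notin> e ` eigvals A" using e by auto
  ultimately have "independent (e ` eigvals A)" by (rule pairwise_orthogonal_independent)
  then have "finite (e ` eigvals A)" by (rule finiteI_independent)
  then show ?thesis using inj finite_imageD by blast
qed

lemma rayleigh_max:
  fixes A :: "real^'n^'n"
  assumes sym: "transpose A = A"
  shows "\<exists>\<mu>\<in>eigvals A. \<forall>z. z \<bullet> (A *v z) \<le> \<mu> * (norm z)\<^sup>2"
proof -
  define q where "q z = z \<bullet> (A *v z)" for z :: "real^'n"
  have "sphere (0::real^'n) 1 \<noteq> {}"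
  proof -
    obtain i :: 'n where True by simp
    have "axis i (1::real) \<in> sphere 0 1" by simp
    then show ?thesis by blast
  qed
  moreover have "continuous_on (sphere 0 1) q"
    unfolding q_def by (intro continuous_intros)
  ultimately obtain x where x: "x \<in> sphere 0 1" and xmax: "\<And>y. y \<in> sphere 0 1 \<Longrightarrow> q y \<le> q x"
    using continuous_attains_sup[OF compact_sphere] by blast
  define \<mu> where "\<mu> = q x"
  have nx: "norm x = 1" using x by simp
  have qscale: "q (r *\<^sub>R z) = r\<^sup>2 * q z" for r z
    by (simp add: q_def power2_eq_square matrix_vector_mult_scaleR)
  have bound: "q z \<le> \<mu> * (norm z)\<^sup>2" for z
  proof (cases "z = 0")
    case True then show ?thesis by (simp add: q_def)
  next
    case False
    define u where "u = (1 / norm z) *\<^sub>R z"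
    have "u \<in> sphere 0 1" using False by (simp add: u_def)
    then have "q u \<le> \<mu>" using xmax \<mu>_def by simp
    moreover have "z = norm z *\<^sub>R u" using False by (simp add: u_def)
    ultimately show ?thesis using qscale[of "norm z" u]
      by (metis mult.commute mult_left_mono zero_le_power2)
  qed
  define g where "g z = q z - \<mu> * (norm z)\<^sup>2" for z
  have gle: "g z \<le> 0" for z using bound[of z] by (simp add: g_def)
  define w where "w = A *v x - \<mu> *\<^sub>R x"
  have expand: "g (x + t *\<^sub>R w) = 2 * t * (w \<bullet> w) + t\<^sup>2 * g w" for t
  proof -
    have q1: "q (x + t *\<^sub>R w) = q x + 2 * t * ((A *v x) \<bullet> w) + t\<^sup>2 * q w"
      using sym_inner[OF sym, of x w]
      by (simp add: q_def matrix_vector_right_distrib inner_add_left inner_add_right power2_eq_square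
          algebra_simps inner_commute)
    have n1: "(norm (x + t *\<^sub>R w))\<^sup>2 = x \<bullet> x + 2 * t * (x \<bullet> w) + t\<^sup>2 * (w \<bullet> w)"
      unfolding power2_norm_eq_inner
      by (simp add: inner_add_left inner_add_right power2_eq_square algebra_simps inner_commute)
    have xx: "x \<bullet> x = 1" using power2_norm_eq_inner[of x] nx by simp
    have gw: "g w = q w - \<mu> * (w \<bullet> w)" by (simp add: g_def power2_norm_eq_inner)
    have hA: "(A *v x) \<bullet> w = w \<bullet> w + \<mu> * (x \<bullet> w)" by (simp add: w_def inner_diff_left)
    have "g (x + t *\<^sub>R w) = q x + 2 * t * ((A *v x) \<bullet> w) + t\<^sup>2 * q w - \<mu> * (x \<bullet> x + 2 * t * (x \<bullet> w) + t\<^sup>2 * (w \<bullet> w))"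
      unfolding g_def using q1 n1 by simp
    also have "\<dots> = 2 * t * (w \<bullet> w) + t\<^sup>2 * g w" unfolding hA gw xx \<mu>_def by (simp add: algebra_simps)
    finally show ?thesis .
  qed
  have W0: "w \<bullet> w \<le> 0"
  proof (rule ccontr)
    assume "\<not> w \<bullet> w \<le> 0"
    then have Wp: "w \<bullet> w > 0" by linarith
    define c where "c = - g w"
    have c0: "c \<ge> 0" using gle[of w] by (simp add: c_def)
    define t where "t = (w \<bullet> w) / (c + 1)"
    have tp: "t > 0" using Wp c0 by (simp add: t_def)
    have "2 * t * (w \<bullet> w) \<le> t\<^sup>2 * c" using gle[of "x + t *\<^sub>R w"] expand[of t] by (simp add: c_def)
    then have "2 * (w \<bullet> w) \<le> t * c" using tp by (simp add: power2_eq_square)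
    also have "t * c = (w \<bullet> w) * (c / (c + 1))" by (simp add: t_def)
    also have "\<dots> \<le> (w \<bullet> w)"
    proof -
      have "c / (c + 1) \<le> 1" using c0 by simp
      then show ?thesis using Wp by (intro mult_left_le) auto
    qed
    finally show False using Wp by simp
  qed
  then have "w = 0" by (metis inner_gt_zero_iff not_le)
  then have "A *v x = \<mu> *\<^sub>R x" by (simp add: w_def)
  moreover have "x \<noteq> 0" using nx by auto
  ultimately have "\<mu> \<in> eigvals A" unfolding eigvals_def by blast
  then show ?thesis using bound unfolding q_def by blast
qed

lemma rayleigh_min:
  fixes A :: "real^'n^'n"
  assumes sym: "transpose A = A"
  shows "\<exists>\<mu>\<in>eigvals A. \<forall>z. z \<bullet> (A *v z) \<ge> \<mu> * (norm z)\<^sup>2"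
proof -
  have "transpose (- A) = - A" using sym by (simp add: transpose_def vec_eq_iff)
  from rayleigh_max[OF this] obtain \<mu> where m: "\<mu> \<in> eigvals (- A)" "\<forall>z. z \<bullet> (- A *v z) \<le> \<mu> * (norm z)\<^sup>2"
    by blast
  have neg: "(- A) *v z = - (A *v z)" for z by (simp add: matrix_vector_mult_def vec_eq_iff sum_negf)
  have "- \<mu> \<in> eigvals A" using m(1) unfolding eigvals_def neg
    by (auto simp: neg) (metis minus_equation_iff scaleR_minus_left)
  moreover have "\<forall>z. z \<bullet> (A *v z) \<ge> (- \<mu>) * (norm z)\<^sup>2"
  proof
    fix z show "z \<bullet> (A *v z) \<ge> (- \<mu>) * (norm z)\<^sup>2" using spec[OF m(2), of z] by (simp add: neg)
  qed
  ultimately show ?thesis by blast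
qed

lemma quad_bounds:
  fixes B :: "real^'d^'m"
  shows "(norm (transpose B *v z))\<^sup>2 \<le> rho_max (B ** transpose B) * (norm z)\<^sup>2"
    and "(norm (transpose B *v z))\<^sup>2 \<ge> rho_min (B ** transpose B) * (norm z)\<^sup>2"
proof -
  define A where "A = B ** transpose B"
  have sym: "transpose A = A" by (simp add: A_def matrix_transpose_mul)
  have q: "z \<bullet> (A *v z) = (norm (transpose B *v z))\<^sup>2" for z
  proof -
    have "z \<bullet> (A *v z) = z \<bullet> (B *v (transpose B *v z))" unfolding A_def matrix_vector_mul_assoc[symmetric] ..
    also have "\<dots> = (z v* B) \<bullet> (transpose B *v z)" by (simp add: dot_lmul_matrix)
    also have "z v* B = transpose B *v z" by simp
    finally show ?thesis by (simp add: power2_norm_eq_inner)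
  qed
  have fin: "finite (eigvals A)" by (rule eigvals_finite[OF sym])
  obtain \<mu> where m: "\<mu> \<in> eigvals A" "\<forall>z. z \<bullet> (A *v z) \<le> \<mu> * (norm z)\<^sup>2"
    using rayleigh_max[OF sym] by blast
  have "\<mu> \<le> rho_max A" unfolding rho_max_def using fin m(1) by simp
  then have "\<mu> * (norm z)\<^sup>2 \<le> rho_max A * (norm z)\<^sup>2" by (rule mult_right_mono) simp
  moreover have "z \<bullet> (A *v z) \<le> \<mu> * (norm z)\<^sup>2" using m(2) by blast
  ultimately show "(norm (transpose B *v z))\<^sup>2 \<le> rho_max (B ** transpose B) * (norm z)\<^sup>2"
    using q[of z] unfolding A_def by linarith
  obtain \<mu>' where m': "\<mu>' \<in> eigvals A" "\<forall>z. z \<bullet> (A *v z) \<ge> \<mu>' * (norm z)\<^sup>2"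
    using rayleigh_min[OF sym] by blast
  have "\<mu>' \<ge> rho_min A" unfolding rho_min_def using fin m'(1) by simp
  then have "\<mu>' * (norm z)\<^sup>2 \<ge> rho_min A * (norm z)\<^sup>2" by (rule mult_right_mono) simp
  moreover have "z \<bullet> (A *v z) \<ge> \<mu>' * (norm z)\<^sup>2" using m'(2) by blast
  ultimately show "(norm (transpose B *v z))\<^sup>2 \<ge> rho_min (B ** transpose B) * (norm z)\<^sup>2"
    using q[of z] unfolding A_def by linarith
qed


lemma lsc_nbhd:
  fixes f :: "'a::metric_space \<Rightarrow> ereal"
  assumes "lsc_fun f" "c < f x"
  shows "\<exists>e>0. \<forall>y. dist y x < e \<longrightarrow> c < f y"
proof -
  have "f x \<le> Liminf (at x) f" using assms(1) unfolding lsc_fun_def by blast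
  with assms(2) have "c < Liminf (at x) f" by (rule order_less_le_trans)
  then have "c < (SUP e\<in>{0<..}. INF y\<in>(ball x e - {x}). f y)" unfolding Liminf_at .
  then obtain e where e: "e \<in> {0<..}" "c < (INF y\<in>(ball x e - {x}). f y)"
    unfolding less_SUP_iff by blast
  show ?thesis
  proof (intro exI[of _ e] conjI allI impI)
    show "0 < e" using e(1) by simp
    fix y assume y: "dist y x < e"
    show "c < f y"
    proof (cases "y = x")
      case True then show ?thesis using assms(2) by simp
    next
      case False
      then have "y \<in> ball x e - {x}" using y by (simp add: dist_commute)
      with e(2) show ?thesis by (rule less_INF_D)
    qed
  qed
qed

lemma lsc_seq:
  fixes f :: "'a::metric_space \<Rightarrow> ereal"
  assumes "lsc_fun f" "c < f x" "u \<longlonglongrightarrow> x"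
  shows "eventually (\<lambda>n. c < f (u n)) sequentially"
proof -
  obtain e where e: "e > 0" "\<forall>y. dist y x < e \<longrightarrow> c < f y" using lsc_nbhd[OF assms(1,2)] by blast
  have "eventually (\<lambda>n. dist (u n) x < e) sequentially" using assms(3) e(1) by (rule tendstoD)
  then show ?thesis by eventually_elim (use e in auto)
qed

lemma convex_fin:
  fixes f :: "'a::real_vector \<Rightarrow> ereal"
  assumes "ereal_convex f" "f x = ereal r" "f y = ereal s" "0 \<le> t" "t \<le> 1"
  shows "f ((1 - t) *\<^sub>R x + t *\<^sub>R y) \<le> ereal ((1 - t) * r + t * s)"
proof -
  have H: "f ((1 - t) *\<^sub>R x + t *\<^sub>R y) \<le> ereal (1 - t) * f x + ereal t * f y"
    by (rule assms(1)[unfolded ereal_convex_def, rule_format, OF conjI[OF assms(4) assms(5)]])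
  also have "ereal (1 - t) * f x + ereal t * f y = ereal ((1 - t) * r + t * s)"
    unfolding assms(2,3) by simp
  finally show ?thesis .
qed

lemma linear_lower:
  fixes f :: "'a::real_normed_vector \<Rightarrow> ereal"
  assumes lsc: "lsc_fun f" and cvx: "ereal_convex f" and nm: "\<And>x. f x \<noteq> -\<infinity>"
    and u0: "f u0 = ereal r0"
  shows "\<exists>K\<ge>0. \<forall>u. f u \<ge> ereal (r0 - 1 - K * norm (u - u0))"
proof -
  have "ereal (r0 - 1) < f u0" using u0 by simp
  from lsc_nbhd[OF lsc this] obtain e where e: "e > 0" "\<And>y. dist y u0 < e \<Longrightarrow> ereal (r0 - 1) < f y"
    by blast
  show ?thesis
  proof (intro exI[of _ "2 / e"] conjI allI)
    show "0 \<le> 2 / e" using e by simp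
    fix u
    show "f u \<ge> ereal (r0 - 1 - 2 / e * norm (u - u0))"
    proof (cases "norm (u - u0) < e")
      case True
      then have a: "ereal (r0 - 1) < f u" using e by (simp add: dist_norm)
      have b: "ereal (r0 - 1 - 2 / e * norm (u - u0)) \<le> ereal (r0 - 1)" using e by simp
      show ?thesis using b less_imp_le[OF a] by (rule order_trans)
    next
      case False
      define R where "R = norm (u - u0)"
      have R: "R \<ge> e" using False by (simp add: R_def)
      define t where "t = e / (2 * R)"
      have Rp: "0 < R" using R e by linarith
      have t1: "0 < t" using Rp e by (simp add: t_def)
      have "e \<le> 1 * (2 * R)" using R e by linarith
      then have t2: "t \<le> 1" using Rp unfolding t_def by (subst divide_le_eq) simp
      note t = t1 t2
      show ?thesis
      proof (cases "f u")
        case (real s)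
        have fz: "f ((1 - t) *\<^sub>R u0 + t *\<^sub>R u) \<le> ereal ((1 - t) * r0 + t * s)"
          by (rule convex_fin[OF cvx u0 real]) (use t in auto)
        have dz: "dist ((1 - t) *\<^sub>R u0 + t *\<^sub>R u) u0 < e"
        proof -
          have "(1 - t) *\<^sub>R u0 + t *\<^sub>R u - u0 = t *\<^sub>R (u - u0)" by (simp add: algebra_simps)
          then have "dist ((1 - t) *\<^sub>R u0 + t *\<^sub>R u) u0 = norm (t *\<^sub>R (u - u0))" by (simp add: dist_norm)
          also have "\<dots> = t * R" using t1 by (simp add: R_def)
          also have "t * R = e / 2" using Rp unfolding t_def by simp
          finally show ?thesis using e by simp
        qed
        have "ereal (r0 - 1) < ereal ((1 - t) * r0 + t * s)"
          using e(2)[OF dz] fz by (rule order_less_le_trans)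
        then have "r0 - 1 < (1 - t) * r0 + t * s" by simp
        then have "t * (r0 - 1 / t) < t * s" using t1 by (simp add: algebra_simps)
        then have "r0 - 1 / t < s" using t1 by simp
        moreover have "1 / t = 2 / e * R" using Rp e unfolding t_def by simp
        ultimately show ?thesis using real e by (simp add: R_def)
      next
        case PInf then show ?thesis by simp
      next
        case MInf then show ?thesis using nm by simp
      qed
    qed
  qed
qed


lemma coerc_real:
  fixes N \<beta> \<alpha> q A :: real
  assumes "0 \<le> \<beta>" "0 \<le> A" "q - \<alpha> \<le> A" "N > 4 * \<beta> + 4 * A + 4"
  shows "\<alpha> - \<beta> * N + N\<^sup>2 / 4 > q"
proof -
  have N1: "N \<ge> 1" using assms by linarith
  have "N\<^sup>2 / 4 = N * (N / 4)" by (simp add: power2_eq_square)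
  also have "N * (N / 4) > N * (\<beta> + A + 1)" using assms N1 by (intro mult_strict_left_mono) auto
  finally have "N\<^sup>2 / 4 > \<beta> * N + N * (A + 1)" by (simp add: algebra_simps)
  moreover have "N * (A + 1) \<ge> 1 * (A + 1)" using N1 assms by (intro mult_right_mono) auto
  ultimately have "\<beta> * N + (A + 1) < N\<^sup>2 / 4" by simp
  then show ?thesis using assms(3) by simp
qed

lemma quad_lower:
  fixes N \<beta> \<alpha> :: real
  shows "\<alpha> - \<beta> * N + N\<^sup>2 / 4 \<ge> \<alpha> - \<beta>\<^sup>2"
proof -
  have "0 \<le> (N / 2 - \<beta>)\<^sup>2" by simp
  then show ?thesis by (simp add: power2_eq_square algebra_simps)
qed

lemma ell_bound:
  fixes z y uu :: "'a::real_normed_vector"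
  assumes "a > 0" "b > 0" "K \<ge> 0"
  shows "a * (rr - 1 - K * norm (b *\<^sub>R z - uu)) + (norm (z - y))\<^sup>2 / 2
     \<ge> (a * (rr - 1) - a * K * norm uu - (norm y)\<^sup>2 / 2) - (a * K * b) * norm z + (norm z)\<^sup>2 / 4"
proof -
  have n1: "norm (b *\<^sub>R z - uu) \<le> b * norm z + norm uu"
    using norm_triangle_ineq4[of "b *\<^sub>R z" uu] assms by simp
  have "a * K * norm (b *\<^sub>R z - uu) \<le> a * K * (b * norm z + norm uu)"
    using n1 assms by (intro mult_left_mono) auto
  moreover have "(norm z)\<^sup>2 \<le> 2 * (norm (z - y))\<^sup>2 + 2 * (norm y)\<^sup>2"
  proof -
    have "norm z \<le> norm (z - y) + norm y" using norm_triangle_ineq[of "z - y" y] by simp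
    then have "(norm z)\<^sup>2 \<le> (norm (z - y) + norm y)\<^sup>2" by (intro power_mono) auto
    also have "\<dots> \<le> 2 * (norm (z - y))\<^sup>2 + 2 * (norm y)\<^sup>2"
      using zero_le_power2[of "norm (z - y) - norm y"]
      by (simp add: power2_eq_square algebra_simps)
    finally show ?thesis .
  qed
  ultimately show ?thesis by (simp add: algebra_simps)
qed

lemma prox_exists:
  fixes f1 :: "'a::euclidean_space \<Rightarrow> ereal"
  assumes pr: "proper_fun f1" and cvx: "ereal_convex f1" and lsc: "lsc_fun f1"
    and a: "a > 0" and b: "b > 0"
  shows "\<exists>p. \<forall>z. ereal a * f1 (b *\<^sub>R p) + ereal ((norm (p - y))\<^sup>2 / 2)
                \<le> ereal a * f1 (b *\<^sub>R z) + ereal ((norm (z - y))\<^sup>2 / 2)"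
proof -
  have nm: "\<And>x. f1 x \<noteq> -\<infinity>" using pr by (simp add: proper_fun_def)
  obtain u0 where "f1 u0 \<noteq> \<infinity>" using pr by (auto simp: proper_fun_def)
  then obtain r0 where u0: "f1 u0 = ereal r0" using nm[of u0] by (cases "f1 u0") auto
  obtain K where K: "K \<ge> 0" "\<And>u. f1 u \<ge> ereal (r0 - 1 - K * norm (u - u0))"
    using linear_lower[OF lsc cvx nm u0] by blast
  define d where "d z = (norm (z - y))\<^sup>2 / 2" for z
  define Q where "Q z = ereal a * f1 (b *\<^sub>R z) + ereal (d z)" for z
  define \<alpha>0 where "\<alpha>0 = a * (r0 - 1) - a * K * norm u0 - (norm y)\<^sup>2 / 2"
  define \<beta>0 where "\<beta>0 = a * K * b"
  have \<beta>0: "\<beta>0 \<ge> 0" using a b K by (simp add: \<beta>0_def)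
  have Qlow: "Q z \<ge> ereal (\<alpha>0 - \<beta>0 * norm z + (norm z)\<^sup>2 / 4)" for z
  proof -
    have "ereal a * f1 (b *\<^sub>R z) \<ge> ereal a * ereal (r0 - 1 - K * norm (b *\<^sub>R z - u0))"
      using K(2) a by (intro ereal_mult_left_mono) auto
    then have "Q z \<ge> ereal (a * (r0 - 1 - K * norm (b *\<^sub>R z - u0)) + d z)"
      unfolding Q_def by (metis add_right_mono plus_ereal.simps(1) times_ereal.simps(1))
    moreover have "a * (r0 - 1 - K * norm (b *\<^sub>R z - u0)) + d z \<ge> \<alpha>0 - \<beta>0 * norm z + (norm z)\<^sup>2 / 4"
      using ell_bound[OF a b K(1), where rr=r0 and z=z and uu=u0 and y=y] unfolding d_def \<alpha>0_def \<beta>0_def by simp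
    ultimately show ?thesis by (meson ereal_less_eq(3) order_trans)
  qed
  have Qglob: "Q z \<ge> ereal (\<alpha>0 - \<beta>0\<^sup>2)" for z
    using Qlow[of z] quad_lower[of \<alpha>0 \<beta>0 "norm z"] by (meson ereal_less_eq(3) order_trans)
  define z0 where "z0 = (1 / b) *\<^sub>R u0"
  have bz0: "b *\<^sub>R z0 = u0" using b by (simp add: z0_def)
  define q0 where "q0 = a * r0 + d z0"
  have Qz0: "Q z0 = ereal q0" unfolding Q_def q0_def bz0 u0 by simp
  define R where "R = 4 * \<beta>0 + 4 * \<bar>(q0 + 1) - \<alpha>0\<bar> + 4"
  have Rbound: "norm z \<le> R" if "Q z < ereal (q0 + 1)" for z
  proof (rule ccontr)
    assume "\<not> norm z \<le> R"
    then have "\<alpha>0 - \<beta>0 * norm z + (norm z)\<^sup>2 / 4 > q0 + 1"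
      using coerc_real[OF \<beta>0 abs_ge_zero abs_ge_self, of "q0 + 1" \<alpha>0 "norm z"] by (simp add: R_def)
    then have "ereal (q0 + 1) < ereal (\<alpha>0 - \<beta>0 * norm z + (norm z)\<^sup>2 / 4)" by simp
    then have "Q z > ereal (q0 + 1)" using Qlow[of z] by (rule less_le_trans)
    then show False using that by simp
  qed
  define m where "m = (INF z. Q z)"
  have mle: "m \<le> ereal q0" unfolding m_def using Qz0 by (metis INF_lower UNIV_I)
  have mge: "m \<ge> ereal (\<alpha>0 - \<beta>0\<^sup>2)" unfolding m_def using Qglob by (rule INF_greatest)
  obtain mr where mr: "m = ereal mr" using mle mge by (cases m) auto
  have "\<exists>z. Q z < ereal (mr + 1 / (real n + 1))" for n
  proof -
    have "m < ereal (mr + 1 / (real n + 1))" using mr by simp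
    then show ?thesis unfolding m_def by (simp add: INF_less_iff)
  qed
  then obtain zs where zs: "\<And>n. Q (zs n) < ereal (mr + 1 / (real n + 1))" by metis
  have mrq0: "mr \<le> q0" using mle mr by simp
  have zsR: "norm (zs n) \<le> R" for n
  proof (rule Rbound)
    have "1 / (real n + 1) \<le> 1" by simp
    then have "mr + 1 / (real n + 1) \<le> q0 + 1" using mrq0 by linarith
    then show "Q (zs n) < ereal (q0 + 1)" using zs[of n] by (meson ereal_less_eq(3) less_le_trans)
  qed
  have "bounded (range zs)" using zsR unfolding bounded_iff by blast
  then obtain l r where r: "strict_mono r" and lim: "(zs \<circ> r) \<longlonglongrightarrow> l"
    using bounded_imp_convergent_subsequence by blast
  have Ql: "Q l \<le> m"
  proof (rule ccontr)
    assume "\<not> Q l \<le> m"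
    then have less: "ereal mr < ereal a * f1 (b *\<^sub>R l) + ereal (d l)" using mr by (simp add: Q_def)
    obtain c where c: "ereal c < f1 (b *\<^sub>R l)" "a * c + d l > mr"
    proof (cases "f1 (b *\<^sub>R l)")
      case (real s)
      then have "mr < a * s + d l" using less by simp
      define \<delta> where "\<delta> = a * s + d l - mr"
      have dp: "\<delta> > 0" using \<open>mr < a * s + d l\<close> by (simp add: \<delta>_def)
      have c1: "ereal (s - \<delta> / (2 * a)) < f1 (b *\<^sub>R l)" using real dp a by simp
      have "a * (s - \<delta> / (2 * a)) = a * s - \<delta> / 2" using a by (simp add: right_diff_distrib)
      then have c2: "a * (s - \<delta> / (2 * a)) + d l > mr" using dp \<delta>_def by linarith
      show ?thesis using that[OF c1 c2] .
    next
      case PInf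
      then show ?thesis using that[of "(mr - d l) / a + 1"] a by (simp add: field_simps)
    next
      case MInf then show ?thesis using nm by simp
    qed
    define \<epsilon> where "\<epsilon> = a * c + d l - mr"
    have ep: "\<epsilon> > 0" using c by (simp add: \<epsilon>_def)
    have blim: "(\<lambda>n. b *\<^sub>R zs (r n)) \<longlonglongrightarrow> b *\<^sub>R l"
      using lim by (intro tendsto_intros) (simp add: o_def)
    have e1: "eventually (\<lambda>n. ereal c < f1 (b *\<^sub>R zs (r n))) sequentially"
      by (rule lsc_seq[OF lsc c(1) blim])
    have dlim: "(\<lambda>n. d (zs (r n))) \<longlonglongrightarrow> d l"
      unfolding d_def using lim by (intro tendsto_intros) (auto simp: o_def)
    have e2: "eventually (\<lambda>n. d (zs (r n)) > d l - \<epsilon> / 2) sequentially"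
      using dlim ep by (intro order_tendstoD(1)) auto
    have e3: "eventually (\<lambda>n. inverse (real (Suc n)) < \<epsilon> / 2) sequentially"
      using LIMSEQ_inverse_real_of_nat ep by (intro order_tendstoD(2)) auto
    obtain n where n1: "ereal c < f1 (b *\<^sub>R zs (r n))" and n2: "d (zs (r n)) > d l - \<epsilon> / 2"
      and n3: "inverse (real (Suc n)) < \<epsilon> / 2"
      using eventually_happens[OF eventually_conj[OF e1 eventually_conj[OF e2 e3]]] by auto
    have rn: "n \<le> r n" using r by (rule seq_suble)
    have "1 / (real (r n) + 1) \<le> inverse (real (Suc n))"
      using rn by (simp add: inverse_eq_divide frac_le)
    then have up: "Q (zs (r n)) < ereal (mr + \<epsilon> / 2)"
      using zs[of "r n"] n3 by (meson ereal_less_eq(3) less_le_trans add_left_mono less_imp_le order_trans)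
    show False
    proof (cases "f1 (b *\<^sub>R zs (r n))")
      case (real s)
      then have "s > c" using n1 by simp
      then have "a * s > a * c" using a by simp
      then have "a * s + d (zs (r n)) > mr + \<epsilon> / 2" using n2 \<epsilon>_def by linarith
      then show False using up real by (simp add: Q_def)
    next
      case PInf then show False using up a by (simp add: Q_def)
    next
      case MInf then show False using nm by simp
    qed
  qed
  have "\<forall>z. Q l \<le> Q z" using Ql unfolding m_def by (meson INF_lower UNIV_I order_trans)
  then show ?thesis unfolding Q_def d_def by blast
qed



lemma prox_min:
  fixes f1 :: "'a::euclidean_space \<Rightarrow> ereal"
  assumes pr: "proper_fun f1" and cvx: "ereal_convex f1" and lsc: "lsc_fun f1"
    and a: "a > 0" and b: "b > 0"
    and p: "p = prox (\<lambda>z. ereal a * f1 (b *\<^sub>R z)) y"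
  shows "\<forall>z. ereal a * f1 (b *\<^sub>R p) + ereal ((norm (p - y))\<^sup>2 / 2)
                \<le> ereal a * f1 (b *\<^sub>R z) + ereal ((norm (z - y))\<^sup>2 / 2)"
  unfolding p prox_def using someI_ex[OF prox_exists[OF pr cvx lsc a b, of y]] by simp

lemma small_t:
  fixes A W :: real
  assumes "\<And>t. 0 < t \<Longrightarrow> t \<le> 1 \<Longrightarrow> 0 \<le> A + t * W" "W \<ge> 0"
  shows "0 \<le> A"
proof (rule ccontr)
  assume "\<not> 0 \<le> A"
  then have dA: "- A > 0" by simp
  define t where "t = min 1 ((- A) / (W + 1))"
  have "0 < (- A) / (W + 1)" using dA assms(2) by (intro divide_pos_pos) auto
  then have t0: "0 < t" by (simp add: t_def)
  have t1: "t \<le> 1" by (simp add: t_def)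
  have "t * W \<le> ((- A) / (W + 1)) * W" using assms(2) by (intro mult_right_mono) (auto simp: t_def)
  also have "((- A) / (W + 1)) * W < - A"
  proof -
    have "((- A) / (W + 1)) * W = (- A) * (W / (W + 1))" by simp
    also have "\<dots> < (- A) * 1" using dA assms(2) by (intro mult_strict_left_mono) auto
    finally show ?thesis by simp
  qed
  finally have "A + t * W < 0" by simp
  then show False using assms(1)[OF t0 t1] by simp
qed

lemma prox_vi:
  fixes f1 :: "'a::euclidean_space \<Rightarrow> ereal"
  assumes pr: "proper_fun f1" and cvx: "ereal_convex f1"
    and a: "a > 0" and b: "b > 0"
    and min: "\<forall>z. ereal a * f1 (b *\<^sub>R p) + ereal ((norm (p - y))\<^sup>2 / 2)
                \<le> ereal a * f1 (b *\<^sub>R z) + ereal ((norm (z - y))\<^sup>2 / 2)"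
  shows "\<exists>r. f1 (b *\<^sub>R p) = ereal r \<and> (\<forall>u s. f1 u = ereal s \<longrightarrow> r + ((y - p) \<bullet> (u - b *\<^sub>R p)) / (a * b) \<le> s)"
proof -
  have nm: "\<And>x. f1 x \<noteq> -\<infinity>" using pr by (simp add: proper_fun_def)
  obtain u0 where "f1 u0 \<noteq> \<infinity>" using pr by (auto simp: proper_fun_def)
  then obtain r0 where u0: "f1 u0 = ereal r0" using nm[of u0] by (cases "f1 u0") auto
  have "f1 (b *\<^sub>R p) \<noteq> \<infinity>"
  proof
    assume inf: "f1 (b *\<^sub>R p) = \<infinity>"
    have "b *\<^sub>R ((1 / b) *\<^sub>R u0) = u0" using b by simp
    then have "ereal a * f1 (b *\<^sub>R p) + ereal ((norm (p - y))\<^sup>2 / 2) \<le> ereal (a * r0 + (norm ((1 / b) *\<^sub>R u0 - y))\<^sup>2 / 2)"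
      using min[rule_format, of "(1 / b) *\<^sub>R u0"] u0 by simp
    then show False using inf a by simp
  qed
  then obtain r where r: "f1 (b *\<^sub>R p) = ereal r" using nm[of "b *\<^sub>R p"] by (cases "f1 (b *\<^sub>R p)") auto
  show ?thesis
  proof (intro exI[of _ r] conjI allI impI)
    show "f1 (b *\<^sub>R p) = ereal r" by (rule r)
    fix u s assume us: "f1 u = ereal s"
    define z where "z = (1 / b) *\<^sub>R u"
    have bz: "b *\<^sub>R z = u" using b by (simp add: z_def)
    define w where "w = z - p"
    have key: "0 \<le> (a * (s - r) + (p - y) \<bullet> w) + t * ((norm w)\<^sup>2 / 2)" if t: "0 < t" "t \<le> 1" for t
    proof -
      define zt where "zt = p + t *\<^sub>R w"
      have bzt: "b *\<^sub>R zt = (1 - t) *\<^sub>R (b *\<^sub>R p) + t *\<^sub>R u"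
        unfolding zt_def w_def bz[symmetric] by (simp add: algebra_simps)
      have fz: "f1 (b *\<^sub>R zt) \<le> ereal ((1 - t) * r + t * s)"
        unfolding bzt by (rule convex_fin[OF cvx r us]) (use t in auto)
      have "ereal (a * r + (norm (p - y))\<^sup>2 / 2) \<le> ereal a * f1 (b *\<^sub>R zt) + ereal ((norm (zt - y))\<^sup>2 / 2)"
        using min[rule_format, of zt] r by simp
      also have "\<dots> \<le> ereal a * ereal ((1 - t) * r + t * s) + ereal ((norm (zt - y))\<^sup>2 / 2)"
        using fz a by (intro add_right_mono ereal_mult_left_mono) auto
      finally have ineq: "a * r + (norm (p - y))\<^sup>2 / 2 \<le> a * ((1 - t) * r + t * s) + (norm (zt - y))\<^sup>2 / 2"
        by simp
      have "(norm (zt - y))\<^sup>2 = (norm (p - y))\<^sup>2 + 2 * t * ((p - y) \<bullet> w) + t\<^sup>2 * (norm w)\<^sup>2"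
        unfolding zt_def power2_norm_eq_inner
        by (simp add: inner_add_left inner_add_right inner_diff_left inner_diff_right power2_eq_square
            algebra_simps inner_commute)
      with ineq have "0 \<le> t * (a * (s - r) + (p - y) \<bullet> w + t * ((norm w)\<^sup>2 / 2))"
        by (simp add: algebra_simps power2_eq_square)
      then show ?thesis using t by (simp add: zero_le_mult_iff)
    qed
    have "0 \<le> a * (s - r) + (p - y) \<bullet> w"
      by (rule small_t[of _ "(norm w)\<^sup>2 / 2"]) (use key in auto)
    moreover have "(y - p) \<bullet> (u - b *\<^sub>R p) = b * ((y - p) \<bullet> w)"
      unfolding w_def bz[symmetric] by (simp add: algebra_simps inner_diff_right)
    moreover have "(y - p) \<bullet> w = - ((p - y) \<bullet> w)" by (simp add: inner_diff_left)
    ultimately have X: "(y - p) \<bullet> w \<le> a * (s - r)"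
      and e: "(y - p) \<bullet> (u - b *\<^sub>R p) = b * ((y - p) \<bullet> w)" by linarith+
    have "((y - p) \<bullet> (u - b *\<^sub>R p)) / (a * b) = ((y - p) \<bullet> w) / a" unfolding e using b by simp
    also have "\<dots> \<le> s - r" using X a by (simp add: pos_divide_le_eq mult.commute)
    finally have "((y - p) \<bullet> (u - b *\<^sub>R p)) / (a * b) \<le> s - r" .
    then show "r + ((y - p) \<bullet> (u - b *\<^sub>R p)) / (a * b) \<le> s" by simp
  qed
qed


lemma adj: "(z::real^'m) \<bullet> (B *v u) = (transpose B *v z) \<bullet> (u::real^'d)"
  by (simp add: dot_lmul_matrix[symmetric])

lemma Mv: "(mat 1 - lam *\<^sub>R (B ** transpose B)) *v (z::real^'m) = z - lam *\<^sub>R (B *v (transpose B *v z))"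
proof -
  have "(lam *\<^sub>R (B ** transpose B)) *v z = lam *\<^sub>R ((B ** transpose B) *v z)"
    by (rule scaleR_matrix_vector_assoc[symmetric])
  also have "(B ** transpose B) *v z = B *v (transpose B *v z)"
    by (rule matrix_vector_mul_assoc[symmetric])
  finally show ?thesis by (simp add: matrix_vector_mult_diff_rdistrib del: transpose_matrix_vector)
qed

lemma step_core:
  fixes f1 :: "real^'m \<Rightarrow> ereal" and B :: "real^'d^'m"
  assumes pr: "proper_fun f1" and cvx: "ereal_convex f1" and lsc: "lsc_fun f1"
    and lam: "lam > 0" and g: "\<gamma> > 0"
    and psd: "\<And>z. lam * (norm (transpose B *v z))\<^sup>2 \<le> (norm z)\<^sup>2"
    and kap: "\<And>z. (norm z)\<^sup>2 - lam * (norm (transpose B *v z))\<^sup>2 \<le> \<kappa> * (norm z)\<^sup>2"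
    and y: "y = B *v xh + (mat 1 - lam *\<^sub>R (B ** transpose B)) *v ((\<gamma> / lam) *\<^sub>R v)"
    and v': "v' = (lam / \<gamma>) *\<^sub>R (y - prox (\<lambda>z. ereal (\<gamma> / lam) * f1 z) y)"
    and x': "x' = xh - \<gamma> *\<^sub>R (transpose B *v v')"
    and w: "w = (lam / \<gamma>) *\<^sub>R (B *v xhs) + (mat 1 - lam *\<^sub>R (B ** transpose B)) *v vs"
    and vs: "vs = w - prox (\<lambda>z. ereal (lam / \<gamma>) * f1 ((\<gamma> / lam) *\<^sub>R z)) w"
    and xs: "xs = xhs - \<gamma> *\<^sub>R (transpose B *v vs)"
  shows "(norm (x' - xs))\<^sup>2 + \<gamma>\<^sup>2 / lam * (norm (v' - vs))\<^sup>2
         \<le> (norm (xh - xhs))\<^sup>2 + \<gamma>\<^sup>2 / lam * \<kappa> * (norm (v - vs))\<^sup>2"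
proof -
  define P where "P = prox (\<lambda>z. ereal (\<gamma> / lam) * f1 z) y"
  define ps where "ps = prox (\<lambda>z. ereal (lam / \<gamma>) * f1 ((\<gamma> / lam) *\<^sub>R z)) w"
  define Ps where "Ps = (\<gamma> / lam) *\<^sub>R ps"
  have a1: "\<gamma> / lam > 0" and a2: "lam / \<gamma> > 0" using lam g by auto
  have Peq: "P = prox (\<lambda>z. ereal (\<gamma> / lam) * f1 (1 *\<^sub>R z)) y" by (simp add: P_def)
  from prox_vi[OF pr cvx a1 zero_less_one prox_min[OF pr cvx lsc a1 zero_less_one Peq]]
  obtain r where r: "f1 P = ereal r" and vi1: "\<And>u s. f1 u = ereal s \<Longrightarrow> r + ((y - P) \<bullet> (u - P)) / (\<gamma> / lam) \<le> s"
    by auto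
  from prox_vi[OF pr cvx a2 a1 prox_min[OF pr cvx lsc a2 a1 ps_def]]
  obtain rs where rs: "f1 Ps = ereal rs" and vi2: "\<And>u s. f1 u = ereal s \<Longrightarrow> rs + ((w - ps) \<bullet> (u - Ps)) / (lam / \<gamma> * (\<gamma> / lam)) \<le> s"
    unfolding Ps_def by auto
  have one: "lam / \<gamma> * (\<gamma> / lam) = 1" using lam g by simp
  have vs': "w - ps = vs" using vs by (simp add: ps_def)
  have c1: "r + ((y - P) \<bullet> (Ps - P)) / (\<gamma> / lam) \<le> rs" by (rule vi1[OF rs])
  have c2: "rs + vs \<bullet> (P - Ps) \<le> r" using vi2[OF r] unfolding one vs' by simp
  have yP: "y - P = (\<gamma> / lam) *\<^sub>R v'" using lam g by (simp add: v' P_def)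
  have "((y - P) \<bullet> (Ps - P)) / (\<gamma> / lam) = v' \<bullet> (Ps - P)" unfolding yP using lam g by simp
  with c1 c2 have cross0: "(v' - vs) \<bullet> (P - Ps) \<ge> 0"
    by (simp add: inner_diff_left inner_diff_right)
  define D where "D = v' - vs"
  define V where "V = v - vs"
  define X where "X = xh - xhs"
  have PPs: "P - Ps = B *v X + (\<gamma> / lam) *\<^sub>R (V - D) - \<gamma> *\<^sub>R (B *v (transpose B *v V))"
  proof -
    have P: "P = y - (\<gamma> / lam) *\<^sub>R v'" using yP by (metis add_diff_cancel_left' diff_add_cancel)
    have "ps = w - vs" using vs' by (metis add_diff_cancel_left' diff_add_cancel)
    then have Ps: "Ps = (\<gamma> / lam) *\<^sub>R (w - vs)" by (simp add: Ps_def)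
    show ?thesis unfolding P Ps y w Mv D_def V_def X_def using lam g
      by (simp add: algebra_simps matrix_vector_mult_diff_distrib matrix_vector_mult_scaleR
            del: transpose_matrix_vector)
  qed
  define T where "T z = transpose B *v z" for z :: "real^'m"
  have Tlin: "T (a - b) = T a - T b" for a b by (simp add: T_def matrix_vector_mult_diff_distrib del: transpose_matrix_vector)
  have cross: "(T D) \<bullet> X + (\<gamma> / lam) * (D \<bullet> V - D \<bullet> D) - \<gamma> * ((T D) \<bullet> (T V)) \<ge> 0"
    using cross0 unfolding D_def[symmetric] PPs
    by (simp add: inner_diff_right inner_add_right adj T_def del: transpose_matrix_vector)
  have x'xs: "x' - xs = X - \<gamma> *\<^sub>R T D"
    unfolding x' xs X_def D_def T_def by (simp add: algebra_simps matrix_vector_mult_diff_distrib del: transpose_matrix_vector)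
  have n1: "(norm (x' - xs))\<^sup>2 = X \<bullet> X - 2 * \<gamma> * ((T D) \<bullet> X) + \<gamma>\<^sup>2 * ((T D) \<bullet> (T D))"
    unfolding x'xs power2_norm_eq_inner
    by (simp add: inner_diff_left inner_diff_right inner_commute power2_eq_square algebra_simps)
  have p1: "lam * ((T D) \<bullet> (T D) - 2 * ((T D) \<bullet> (T V)) + (T V) \<bullet> (T V)) \<le> D \<bullet> D - 2 * (D \<bullet> V) + V \<bullet> V"
    using psd[of "D - V"] unfolding T_def[symmetric] Tlin power2_norm_eq_inner
    by (simp add: inner_diff_left inner_diff_right inner_commute algebra_simps)
  have k1: "V \<bullet> V - lam * ((T V) \<bullet> (T V)) \<le> \<kappa> * (V \<bullet> V)"
    using kap[of V] unfolding T_def[symmetric] power2_norm_eq_inner by simp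
  define g2 where "g2 = \<gamma>\<^sup>2 / lam"
  have g2p: "g2 > 0" using lam g by (simp add: g2_def)
  have g2l: "g2 * lam = \<gamma>\<^sup>2" using lam by (simp add: g2_def)
  have g2g: "\<gamma> * (\<gamma> / lam) = g2" by (simp add: g2_def power2_eq_square)
  have h1: "2 * \<gamma> * ((T D) \<bullet> X) \<ge> 2 * g2 * (D \<bullet> D - D \<bullet> V) + 2 * (g2 * lam) * ((T D) \<bullet> (T V))"
  proof -
    define q where "q = \<gamma> / lam"
    have "0 \<le> 2 * \<gamma> * ((T D) \<bullet> X + q * (D \<bullet> V - D \<bullet> D) - \<gamma> * ((T D) \<bullet> (T V)))"
      using cross g unfolding q_def by simp
    also have "2 * \<gamma> * ((T D) \<bullet> X + q * (D \<bullet> V - D \<bullet> D) - \<gamma> * ((T D) \<bullet> (T V)))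
        = 2 * \<gamma> * ((T D) \<bullet> X) + 2 * (\<gamma> * q) * (D \<bullet> V - D \<bullet> D) - 2 * (\<gamma> * \<gamma>) * ((T D) \<bullet> (T V))"
      by (simp add: algebra_simps)
    also have "\<gamma> * \<gamma> = g2 * lam" using g2l by (simp add: power2_eq_square)
    also have "\<gamma> * q = g2" unfolding q_def by (rule g2g)
    finally have "0 \<le> 2 * \<gamma> * ((T D) \<bullet> X) + 2 * g2 * (D \<bullet> V - D \<bullet> D) - 2 * (g2 * lam) * ((T D) \<bullet> (T V))" .
    moreover have "g2 * (D \<bullet> V - D \<bullet> D) = - (g2 * (D \<bullet> D - D \<bullet> V))" by (simp add: algebra_simps)
    ultimately show ?thesis by linarith
  qed
  have h2: "g2 * (2 * (D \<bullet> V) - D \<bullet> D - 2 * lam * ((T D) \<bullet> (T V)) + lam * ((T D) \<bullet> (T D))) \<le> g2 * (\<kappa> * (V \<bullet> V))"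
    using p1 k1 g2p by (intro mult_left_mono) (auto simp: algebra_simps)
  have "(norm (x' - xs))\<^sup>2 + \<gamma>\<^sup>2 / lam * (norm (v' - vs))\<^sup>2
      = X \<bullet> X - 2 * \<gamma> * ((T D) \<bullet> X) + (g2 * lam) * ((T D) \<bullet> (T D)) + g2 * (D \<bullet> D)"
    unfolding n1 g2l by (simp add: g2_def D_def power2_norm_eq_inner)
  also have "\<dots> \<le> X \<bullet> X + g2 * (2 * (D \<bullet> V) - D \<bullet> D - 2 * lam * ((T D) \<bullet> (T V)) + lam * ((T D) \<bullet> (T D)))"
    using h1 by (simp add: algebra_simps)
  also have "\<dots> \<le> X \<bullet> X + g2 * (\<kappa> * (V \<bullet> V))" using h2 by simp
  also have "\<dots> = (norm (xh - xhs))\<^sup>2 + \<gamma>\<^sup>2 / lam * \<kappa> * (norm (v - vs))\<^sup>2"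
    by (simp add: X_def V_def g2_def power2_norm_eq_inner)
  finally show ?thesis .
qed



lemma primal:
  fixes f :: "'a::real_inner \<Rightarrow> real"
  assumes d: "\<And>x. (f has_derivative (\<lambda>h. G x \<bullet> h)) (at x)"
    and sc: "strongly_convex \<nu> f" and nu: "\<nu> > 0" and be: "\<beta> > 0"
    and L: "(1 / \<beta>)-lipschitz_on UNIV G" and C1: "C1 > 0"
    and g: "\<gamma> > 0" and gb: "\<gamma> \<le> \<beta> * \<nu> / (2 * (\<nu> + 2 * C1 * \<beta>))"
  shows "(norm ((x - xs) - \<gamma> *\<^sub>R (G x - G xs)))\<^sup>2 \<le> (1 - \<gamma> * \<nu> - 2 * C1 * \<gamma>\<^sup>2) * (norm (x - xs))\<^sup>2"
proof -
  define s where "s = (G x - G xs) \<bullet> (x - xs)"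
  define N where "N = (norm (x - xs))\<^sup>2"
  define Gn where "Gn = (norm (G x - G xs))\<^sup>2"
  have cvx: "\<And>a b. f b \<ge> f a + G a \<bullet> (b - a)"
  proof -
    fix a b
    have "f b \<ge> f a + G a \<bullet> (b - a) + \<nu> / 2 * (norm (b - a))\<^sup>2" by (rule sgi[OF d sc])
    moreover have "\<nu> / 2 * (norm (b - a))\<^sup>2 \<ge> 0" using nu by simp
    ultimately show "f b \<ge> f a + G a \<bullet> (b - a)" by linarith
  qed
  have s1: "s \<ge> \<nu> * N"
  proof -
    have "f x \<ge> f xs + G xs \<bullet> (x - xs) + \<nu> / 2 * (norm (x - xs))\<^sup>2" by (rule sgi[OF d sc])
    moreover have "f xs \<ge> f x + G x \<bullet> (xs - x) + \<nu> / 2 * (norm (xs - x))\<^sup>2" by (rule sgi[OF d sc])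
    moreover have "G x \<bullet> (xs - x) = - (G x \<bullet> (x - xs))" by (simp add: inner_diff_right)
    moreover have "norm (xs - x) = norm (x - xs)" by (rule norm_minus_commute)
    ultimately show ?thesis by (simp add: s_def N_def inner_diff_left)
  qed
  have s2: "s \<ge> \<beta> / 2 * Gn"
  proof -
    have "(G x - G xs) \<bullet> (x - xs) \<ge> (norm (G x - G xs))\<^sup>2 / (2 * (1 / \<beta>))"
      by (rule cocoercive[OF d cvx L]) (use be in simp)
    then show ?thesis by (simp add: s_def Gn_def mult.commute)
  qed
  have N0: "N \<ge> 0" by (simp add: N_def)
  have expand: "(norm ((x - xs) - \<gamma> *\<^sub>R (G x - G xs)))\<^sup>2 = N - 2 * \<gamma> * s + \<gamma>\<^sup>2 * Gn"
    unfolding N_def Gn_def s_def power2_norm_eq_inner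
    by (simp add: inner_diff_left inner_diff_right inner_commute power2_eq_square algebra_simps)
  have hb: "\<gamma> * (2 * (\<nu> + 2 * C1 * \<beta>)) \<le> \<beta> * \<nu>"
  proof -
    have "C1 * \<beta> > 0" using C1 be by simp
    then have den: "0 < 2 * (\<nu> + 2 * C1 * \<beta>)" using nu by simp
    show ?thesis using gb unfolding pos_le_divide_eq[OF den] .
  qed
  have hb': "2 * \<gamma> * \<nu> + 4 * (C1 * \<gamma> * \<beta>) \<le> \<beta> * \<nu>" using hb by (simp add: algebra_simps)
  have pos: "C1 * \<gamma> * \<beta> > 0" using C1 g be by simp
  have gbeta: "\<gamma> \<le> \<beta> / 2"
  proof -
    have "(2 * \<gamma>) * \<nu> \<le> \<beta> * \<nu>" using hb' pos by linarith
    then have "2 * \<gamma> \<le> \<beta>" using nu by (simp add: mult_le_cancel_right_pos)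
    then show ?thesis by simp
  qed
  have Gn_le: "\<gamma>\<^sup>2 * Gn \<le> \<gamma>\<^sup>2 * (2 / \<beta> * s)"
  proof (rule mult_left_mono)
    show "Gn \<le> 2 / \<beta> * s" using s2 be by (simp add: field_simps)
  qed simp
  define c0 where "c0 = 2 * \<gamma> - 2 * \<gamma>\<^sup>2 / \<beta>"
  have c0e: "2 * \<gamma> * s - \<gamma>\<^sup>2 * (2 / \<beta> * s) = c0 * s" by (simp add: c0_def algebra_simps)
  have c0p: "c0 \<ge> 0"
  proof -
    have "\<gamma>\<^sup>2 / \<beta> \<le> \<gamma>" using gbeta g be by (simp add: power2_eq_square field_simps)
    then show ?thesis by (simp add: c0_def)
  qed
  have "c0 * s \<ge> c0 * (\<nu> * N)" by (rule mult_left_mono[OF s1 c0p])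
  have key: "c0 * \<nu> \<ge> \<gamma> * \<nu> + 2 * C1 * \<gamma>\<^sup>2"
  proof -
    have "\<beta> * \<nu> \<ge> 2 * \<gamma> * \<nu> + 2 * (C1 * \<gamma> * \<beta>)"
      using hb' pos by linarith
    then have "\<beta> * \<nu> \<ge> 2 * \<gamma> * \<nu> + 2 * C1 * \<gamma> * \<beta>" by (simp add: mult.assoc)
    then have "\<gamma> * (\<beta> * \<nu>) \<ge> \<gamma> * (2 * \<gamma> * \<nu> + 2 * C1 * \<gamma> * \<beta>)" using g by (intro mult_left_mono) auto
    then have "\<gamma> * \<beta> * \<nu> \<ge> 2 * \<gamma>\<^sup>2 * \<nu> + 2 * C1 * \<gamma>\<^sup>2 * \<beta>" by (simp add: algebra_simps power2_eq_square)
    then have "(\<gamma> * \<beta> * \<nu>) / \<beta> \<ge> (2 * \<gamma>\<^sup>2 * \<nu> + 2 * C1 * \<gamma>\<^sup>2 * \<beta>) / \<beta>" using be by (intro divide_right_mono) auto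
    then have "\<gamma> * \<nu> \<ge> 2 * \<gamma>\<^sup>2 * \<nu> / \<beta> + 2 * C1 * \<gamma>\<^sup>2" using be by (simp add: add_divide_distrib)
    then show ?thesis by (simp add: c0_def algebra_simps)
  qed
  have "(norm ((x - xs) - \<gamma> *\<^sub>R (G x - G xs)))\<^sup>2 \<le> N - c0 * s"
    using expand Gn_le c0e by linarith
  also have "\<dots> \<le> N - c0 * \<nu> * N" using \<open>c0 * s \<ge> c0 * (\<nu> * N)\<close> by (simp add: mult.assoc)
  also have "\<dots> \<le> N - (\<gamma> * \<nu> + 2 * C1 * \<gamma>\<^sup>2) * N" using key N0 by (simp add: mult_right_mono)
  also have "\<dots> = (1 - \<gamma> * \<nu> - 2 * C1 * \<gamma>\<^sup>2) * (norm (x - xs))\<^sup>2" by (simp add: N_def algebra_simps)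
  finally show ?thesis .
qed


lemma exp_pair_finite:
  fixes H :: "'a \<times> 'b \<Rightarrow> real"
  assumes fA: "finite (set_pmf A)" and fB: "finite (set_pmf B)"
  shows "measure_pmf.expectation (pair_pmf A B) H
         = measure_pmf.expectation B (\<lambda>b. measure_pmf.expectation A (\<lambda>a. H (a, b)))"
proof -
  have "measure_pmf.expectation (pair_pmf A B) H = (\<Sum>x\<in>set_pmf A \<times> set_pmf B. H x * pmf (pair_pmf A B) x)"
    by (rule integral_measure_pmf_real) (use fA fB in auto)
  also have "\<dots> = (\<Sum>b\<in>set_pmf B. \<Sum>a\<in>set_pmf A. H (a, b) * (pmf A a * pmf B b))"
    by (subst sum.cartesian_product') (subst sum.swap, simp add: pmf_pair)
  also have "\<dots> = (\<Sum>b\<in>set_pmf B. (\<Sum>a\<in>set_pmf A. H (a, b) * pmf A a) * pmf B b)"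
    by (simp add: sum_distrib_right mult.assoc)
  also have "\<dots> = measure_pmf.expectation B (\<lambda>b. \<Sum>a\<in>set_pmf A. H (a, b) * pmf A a)"
    by (rule integral_measure_pmf_real[symmetric]) (use fB in auto)
  also have "\<dots> = measure_pmf.expectation B (\<lambda>b. measure_pmf.expectation A (\<lambda>a. H (a, b)))"
    by (intro Bochner_Integration.integral_cong refl integral_measure_pmf_real[symmetric]) (use fA in auto)
  finally show ?thesis .
qed

definition PP :: "nat \<Rightarrow> nat \<Rightarrow> nat \<Rightarrow> (nat \<Rightarrow> nat) pmf" where
  "PP n p k = Pi_pmf {1..<k} 1 (\<lambda>_. pmf_of_set {1..n div p})"

lemma Ek_PP: "Ek n p k F = measure_pmf.expectation (PP n p k) F"
  by (simp add: Ek_def PP_def)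

lemma PP_finite:
  assumes "n div p \<ge> 1"
  shows "finite (set_pmf (PP n p k))"
proof -
  have "set_pmf (pmf_of_set {1..n div p}) = {1..n div p}" using assms by (intro set_pmf_of_set) auto
  then show ?thesis unfolding PP_def by (subst set_Pi_pmf) (auto intro!: finite_PiE_dflt)
qed

lemma Ek_mono:
  assumes "n div p \<ge> 1" "\<And>\<omega>. F \<omega> \<le> G \<omega>"
  shows "Ek n p k F \<le> Ek n p k G"
  unfolding Ek_PP using assms
  by (intro integral_mono integrable_measure_pmf_finite PP_finite) auto

lemma Ek_add:
  assumes "n div p \<ge> 1"
  shows "Ek n p k (\<lambda>\<omega>. F \<omega> + G \<omega>) = Ek n p k F + Ek n p k G"
  unfolding Ek_PP using assms
  by (intro Bochner_Integration.integral_add integrable_measure_pmf_finite PP_finite) auto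

lemma Ek_cmult: "Ek n p k (\<lambda>\<omega>. c * F \<omega>) = c * Ek n p k F"
  unfolding Ek_PP by simp

lemma Ek_const: "Ek n p k (\<lambda>\<omega>. c) = c"
  unfolding Ek_PP by simp

lemma Ek_split:
  assumes N: "n div p \<ge> 1" and k: "k \<ge> 1"
  shows "Ek n p (k + 1) F = Ek n p k (\<lambda>\<omega>. (\<Sum>i\<in>{1..n div p}. F (fun_upd \<omega> k i)) / real (n div p))"
proof -
  define U where "U = pmf_of_set {1..n div p}"
  have sU: "set_pmf U = {1..n div p}" unfolding U_def using N by (intro set_pmf_of_set) auto
  have fU: "finite (set_pmf U)" using sU by simp
  have ins: "{1..<k + 1} = insert k {1..<k}" using k by auto
  have "PP n p (k + 1) = map_pmf (\<lambda>(y, f). f(k := y)) (pair_pmf U (PP n p k))"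
    unfolding PP_def ins U_def by (rule Pi_pmf_insert) auto
  then have "Ek n p (k + 1) F = measure_pmf.expectation (pair_pmf U (PP n p k)) (\<lambda>x. F ((\<lambda>(y, f). f(k := y)) x))"
    unfolding Ek_PP by simp
  also have "\<dots> = measure_pmf.expectation (PP n p k) (\<lambda>f. measure_pmf.expectation U (\<lambda>y. F (fun_upd f k y)))"
    by (subst exp_pair_finite[OF fU PP_finite[OF N]]) simp
  also have "\<dots> = Ek n p k (\<lambda>\<omega>. (\<Sum>i\<in>{1..n div p}. F (fun_upd \<omega> k i)) / real (n div p))"
    unfolding Ek_PP U_def using N by (subst integral_pmf_of_set) auto
  finally show ?thesis .
qed

lemma alg_local:
  assumes "\<And>j. j < k \<Longrightarrow> \<omega> j = \<omega>' j"
  shows "alg f1 B p g c \<alpha> lam x1 v1 \<omega> k = alg f1 B p g c \<alpha> lam x1 v1 \<omega>' k"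
  using assms
proof (induction k)
  case 0 then show ?case by simp
next
  case (Suc k)
  then show ?case by simp
qed

lemma block_sum:
  fixes h :: "nat \<Rightarrow> 'a::comm_monoid_add"
  shows "(\<Sum>i=1..N. \<Sum>j=(i-1)*p+1..i*p. h j) = (\<Sum>j=1..N*p. h j)"
proof (induction N)
  case 0 then show ?case by simp
next
  case (Suc N)
  have "(\<Sum>j=1..N*p + p. h j) = (\<Sum>j=1..N*p. h j) + (\<Sum>j=N*p+1..N*p + p. h j)"
    by (rule sum.ub_add_nat) simp
  then show ?case using Suc by (simp add: add.commute)
qed



lemma step_pos: "c > 0 \<Longrightarrow> m \<ge> 1 \<Longrightarrow> stepsize c \<alpha> m > 0"
  unfolding stepsize_def by simp

lemma step_anti:
  assumes "c > 0" "\<alpha> \<ge> 0" "1 \<le> m" "m \<le> m'"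
  shows "stepsize c \<alpha> m' \<le> stepsize c \<alpha> m"
proof -
  have p: "real m powr \<alpha> > 0" using assms by simp
  have "real m powr \<alpha> \<le> real m' powr \<alpha>" using assms by (intro powr_mono2) auto
  then show ?thesis unfolding stepsize_def using assms p by (intro divide_left_mono) auto
qed

lemma sq_le: "(norm (a + b :: 'a::real_normed_vector))\<^sup>2 \<le> 2 * (norm a)\<^sup>2 + 2 * (norm b)\<^sup>2"
proof -
  have "norm (a + b) \<le> norm a + norm b" by (rule norm_triangle_ineq)
  then have "(norm (a + b))\<^sup>2 \<le> (norm a + norm b)\<^sup>2" by (intro power_mono) auto
  also have "\<dots> \<le> 2 * (norm a)\<^sup>2 + 2 * (norm b)\<^sup>2"
    using zero_le_power2[of "norm a - norm b"] by (simp add: power2_eq_square algebra_simps)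
  finally show ?thesis .
qed

lemma sum_sq_centered:
  fixes u :: "'a::real_inner"
  assumes "(\<Sum>i\<in>I. e i) = 0"
  shows "(\<Sum>i\<in>I. (norm (u - \<gamma> *\<^sub>R e i))\<^sup>2) = real (card I) * (norm u)\<^sup>2 + \<gamma>\<^sup>2 * (\<Sum>i\<in>I. (norm (e i))\<^sup>2)"
proof -
  have "(\<Sum>i\<in>I. (norm (u - \<gamma> *\<^sub>R e i))\<^sup>2) = (\<Sum>i\<in>I. (norm u)\<^sup>2 - 2 * \<gamma> * (u \<bullet> e i) + \<gamma>\<^sup>2 * (norm (e i))\<^sup>2)"
    by (intro sum.cong refl) (unfold power2_norm_eq_inner, simp add: inner_diff_left inner_diff_right inner_commute algebra_simps power2_eq_square)
  also have "\<dots> = real (card I) * (norm u)\<^sup>2 - 2 * \<gamma> * (u \<bullet> (\<Sum>i\<in>I. e i)) + \<gamma>\<^sup>2 * (\<Sum>i\<in>I. (norm (e i))\<^sup>2)"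
    by (simp add: sum.distrib sum_subtractf inner_sum_right sum_distrib_left)
  finally show ?thesis using assms by simp
qed

theorem theorem4p8:
  fixes f1 :: "real^'m \<Rightarrow> ereal"
    and B :: "real^'d^'m"
    and n p :: nat
    and \<phi> :: "nat \<Rightarrow> real^'d \<Rightarrow> real"
    and g\<phi> :: "nat \<Rightarrow> real^'d \<Rightarrow> real^'d"
    and f2 :: "real^'d \<Rightarrow> real"
    and gf2 :: "real^'d \<Rightarrow> real^'d"
    and \<nu> \<beta> lam c \<alpha> C1 C2 :: real
    and xs x1 :: "real^'d" and vs v1 :: "real^'m"
    and k0 :: nat
  assumes f1: "proper_fun f1" "ereal_convex f1" "lsc_fun f1"
    and B_rank: "rank B = CARD('m)"
    and np: "0 < n" "0 < p" "p dvd n"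
    and \<phi>_grad: "\<And>j x. j \<in> {1..n} \<Longrightarrow> (\<phi> j has_derivative (\<lambda>h. g\<phi> j x \<bullet> h)) (at x)"
    and \<phi>_smooth: "\<And>j. j \<in> {1..n} \<Longrightarrow> continuous_on UNIV (g\<phi> j)"
    and \<phi>_convex: "\<And>j. j \<in> {1..n} \<Longrightarrow> convex_on UNIV (\<phi> j)"
    and f2_def: "\<And>x. f2 x = (1 / real n) * (\<Sum>j=1..n. \<phi> j x)"
    and gf2_def: "\<And>x. gf2 x = (1 / real n) *\<^sub>R (\<Sum>j=1..n. g\<phi> j x)"
    and \<nu>: "0 < \<nu>" "strongly_convex \<nu> f2"
    and \<beta>: "0 < \<beta>" "(1 / \<beta>)-lipschitz_on UNIV gf2"
    and xs_min: "\<And>x. f1 (B *v xs) + ereal (f2 xs) \<le> f1 (B *v x) + ereal (f2 x)"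
    and vs_fix: "\<And>k. k \<ge> 1 \<Longrightarrow>
       vs = (let \<gamma> = stepsize c \<alpha> k;
                 w = (lam / \<gamma>) *\<^sub>R (B *v (xs - \<gamma> *\<^sub>R gf2 xs)) + (mat 1 - lam *\<^sub>R (B ** transpose B)) *v vs
             in w - prox (\<lambda>z. ereal (lam / \<gamma>) * f1 ((\<gamma> / lam) *\<^sub>R z)) w)"
    and xs_fix: "\<And>k. k \<ge> 1 \<Longrightarrow>
       xs = xs - stepsize c \<alpha> k *\<^sub>R gf2 xs - stepsize c \<alpha> k *\<^sub>R (transpose B *v vs)"
    and params: "0 < c" "0 < \<alpha>" "\<alpha> \<le> 1" "0 < lam" "lam < 1 / rho_max (B ** transpose B)"
    and C: "0 < C1" "0 < C2"
    and var_bound: "\<And>k. k \<ge> 1 \<Longrightarrow>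
       Ek n p (k + 1) (\<lambda>\<omega>. (norm (batch_grad p g\<phi> (\<omega> k) (fst (alg f1 B p g\<phi> c \<alpha> lam x1 v1 \<omega> k))
                               - gf2 (fst (alg f1 B p g\<phi> c \<alpha> lam x1 v1 \<omega> k))))\<^sup>2)
       \<le> C1 * Ek n p k (\<lambda>\<omega>. (norm (fst (alg f1 B p g\<phi> c \<alpha> lam x1 v1 \<omega> k)))\<^sup>2) + C2"
    and k0: "0 < k0"
      "stepsize c \<alpha> k0 \<le> min (\<beta> * \<nu> / (2 * (\<nu> + 2 * C1 * \<beta>))) (lam * rho_min (B ** transpose B) / \<nu>)"
  shows "\<forall>k \<ge> k0.
     (let a = (\<lambda>k. Ek n p k (\<lambda>\<omega>. (norm (fst (alg f1 B p g\<phi> c \<alpha> lam x1 v1 \<omega> k) - xs))\<^sup>2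
                  + (stepsize c \<alpha> k)\<^sup>2 / lam * (norm (snd (alg f1 B p g\<phi> c \<alpha> lam x1 v1 \<omega> k) - vs))\<^sup>2));
          M1 = 4 * C1 * (norm xs)\<^sup>2 + 2 * C2
      in a (k + 1) \<le> (1 - \<nu> * stepsize c \<alpha> k) * a k + (stepsize c \<alpha> k)\<^sup>2 * M1)"
proof (intro allI impI)
  fix k assume kk: "k \<ge> k0"
  have k1: "k \<ge> 1" using k0(1) kk by simp
  define N where "N = n div p"
  have nN: "n = N * p" using np(3) by (simp add: N_def)
  have N1: "N \<ge> 1" using np nN by (cases N) auto
  have N1': "n div p \<ge> 1" using N1 by (simp add: N_def)
  have realN: "real n / real p = real N" using np(2) nN by simp
  define \<gamma> where "\<gamma> = stepsize c \<alpha> k"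
  define \<gamma>' where "\<gamma>' = stepsize c \<alpha> (k + 1)"
  have gp: "\<gamma> > 0" unfolding \<gamma>_def using params(1) k1 by (rule step_pos)
  have g'p: "\<gamma>' > 0" unfolding \<gamma>'_def using params(1) k1 by (intro step_pos) auto
  have g'g: "\<gamma>' \<le> \<gamma>" unfolding \<gamma>_def \<gamma>'_def using params k1 by (intro step_anti) auto
  have gk0: "\<gamma> \<le> stepsize c \<alpha> k0" unfolding \<gamma>_def using params k0 kk by (intro step_anti) auto
  have hg1: "\<gamma> \<le> \<beta> * \<nu> / (2 * (\<nu> + 2 * C1 * \<beta>))" using gk0 k0(2) by simp
  have hg2: "\<gamma> \<le> lam * rho_min (B ** transpose B) / \<nu>" using gk0 k0(2) by simp
  define rmin where "rmin = rho_min (B ** transpose B)"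
  define rmax where "rmax = rho_max (B ** transpose B)"
  have lam: "lam > 0" using params by simp
  have rmaxp: "rmax > 0"
  proof (rule ccontr)
    assume "\<not> rmax > 0"
    then have "1 / rmax \<le> 0" by (simp add: divide_le_0_iff)
    moreover have "lam < 1 / rmax" using params(5) by (simp add: rmax_def)
    ultimately show False using params(4) by linarith
  qed
  have lr: "lam * rmax < 1" using params(5) rmaxp by (simp add: rmax_def field_simps)
  have psd: "lam * (norm (transpose B *v z))\<^sup>2 \<le> (norm z)\<^sup>2" for z
  proof -
    have "lam * (norm (transpose B *v z))\<^sup>2 \<le> lam * (rmax * (norm z)\<^sup>2)"
      using quad_bounds(1)[of B z] lam by (intro mult_left_mono) (auto simp: rmax_def)
    also have "\<dots> = (lam * rmax) * (norm z)\<^sup>2" by simp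
    also have "\<dots> \<le> 1 * (norm z)\<^sup>2" using lr by (intro mult_right_mono) auto
    finally show ?thesis by simp
  qed
  define \<kappa> where "\<kappa> = 1 - lam * rmin"
  have kap: "(norm z)\<^sup>2 - lam * (norm (transpose B *v z))\<^sup>2 \<le> \<kappa> * (norm z)\<^sup>2" for z
  proof -
    have "lam * (rmin * (norm z)\<^sup>2) \<le> lam * (norm (transpose B *v z))\<^sup>2"
      using quad_bounds(2)[of B z] lam by (intro mult_left_mono) (auto simp: rmin_def)
    then show ?thesis by (simp add: \<kappa>_def algebra_simps)
  qed
  have kapg: "\<kappa> \<le> 1 - \<nu> * \<gamma>"
  proof -
    have "\<gamma> * \<nu> \<le> lam * rmin" using hg2 \<nu>(1) by (simp add: pos_le_divide_eq rmin_def)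
    then show ?thesis by (simp add: \<kappa>_def mult.commute)
  qed
  have deriv: "\<And>x. (f2 has_derivative (\<lambda>h. gf2 x \<bullet> h)) (at x)"
  proof -
    fix x
    have "((\<lambda>x. (1 / real n) * (\<Sum>j=1..n. \<phi> j x)) has_derivative (\<lambda>h. (1 / real n) * (\<Sum>j=1..n. g\<phi> j x \<bullet> h))) (at x)"
      by (intro derivative_intros \<phi>_grad) auto
    moreover have "(\<lambda>x. (1 / real n) * (\<Sum>j=1..n. \<phi> j x)) = f2" using f2_def by auto
    moreover have "(\<lambda>h. (1 / real n) * (\<Sum>j=1..n. g\<phi> j x \<bullet> h)) = (\<lambda>h. gf2 x \<bullet> h)"
      by (simp add: gf2_def inner_sum_left)
    ultimately show "(f2 has_derivative (\<lambda>h. gf2 x \<bullet> h)) (at x)" by simp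
  qed
  have bsum: "(\<Sum>i\<in>{1..N}. batch_grad p g\<phi> i x - gf2 x) = 0" for x
  proof -
    have "(\<Sum>i\<in>{1..N}. batch_grad p g\<phi> i x) = (1 / real p) *\<^sub>R (\<Sum>i=1..N. \<Sum>j=(i-1)*p+1..i*p. g\<phi> j x)"
      unfolding batch_grad_def by (simp add: scaleR_sum_right)
    also have "\<dots> = (1 / real p) *\<^sub>R (\<Sum>j=1..N*p. g\<phi> j x)" by (simp only: block_sum)
    also have "\<dots> = (1 / real p) *\<^sub>R (\<Sum>j=1..n. g\<phi> j x)" using nN by simp
    also have "\<dots> = real N *\<^sub>R gf2 x"
      using np realN N1 by (simp add: gf2_def field_simps)
    finally show ?thesis by (simp add: sum_subtractf sum_constant_scaleR del: sum_constant)
  qed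
  define A where "A = 1 - \<gamma> * \<nu> - 2 * C1 * \<gamma>\<^sup>2"
  define B0 where "B0 = \<gamma>\<^sup>2 / lam * (1 - \<nu> * \<gamma>)"
  define AL where "AL = alg f1 B p g\<phi> c \<alpha> lam x1 v1"
  define \<Phi> where "\<Phi> \<omega> = (norm (fst (AL \<omega> (k + 1)) - xs))\<^sup>2 + \<gamma>'\<^sup>2 / lam * (norm (snd (AL \<omega> (k + 1)) - vs))\<^sup>2" for \<omega>
  define Dn where "Dn \<omega> = (norm (fst (AL \<omega> k) - xs))\<^sup>2" for \<omega>
  define Vn where "Vn \<omega> = (norm (snd (AL \<omega> k) - vs))\<^sup>2" for \<omega>
  define Xn where "Xn \<omega> = (norm (fst (AL \<omega> k)))\<^sup>2" for \<omega>
  define Er where "Er \<omega> = (norm (batch_grad p g\<phi> (\<omega> k) (fst (AL \<omega> k)) - gf2 (fst (AL \<omega> k))))\<^sup>2" for \<omega>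
  have pw: "(\<Sum>i\<in>{1..N}. \<Phi> (fun_upd \<omega> k i)) / real N
      \<le> A * Dn \<omega> + \<gamma>\<^sup>2 * ((\<Sum>i\<in>{1..N}. Er (fun_upd \<omega> k i)) / real N) + B0 * Vn \<omega>" for \<omega>
  proof -
    define x where "x = fst (AL \<omega> k)"
    define v where "v = snd (AL \<omega> k)"
    define e where "e i = batch_grad p g\<phi> i x - gf2 x" for i
    define u where "u = (x - xs) - \<gamma> *\<^sub>R (gf2 x - gf2 xs)"
    have loc: "AL (fun_upd \<omega> k i) k = AL \<omega> k" for i
      unfolding AL_def by (rule alg_local) simp
    have Er_i: "Er (fun_upd \<omega> k i) = (norm (e i))\<^sup>2" for i
      by (simp add: Er_def loc e_def x_def)
    have one: "\<Phi> (fun_upd \<omega> k i) \<le> (norm (u - \<gamma> *\<^sub>R e i))\<^sup>2 + B0 * Vn \<omega>" for i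
    proof -
      have step: "AL (fun_upd \<omega> k i) (k + 1) = alg_step f1 B p g\<phi> c \<alpha> lam k i (x, v)"
        using k1 loc[of i] by (simp add: AL_def x_def v_def)
      define xh where "xh = x - \<gamma> *\<^sub>R batch_grad p g\<phi> i x"
      define y where "y = B *v xh + (mat 1 - lam *\<^sub>R (B ** transpose B)) *v ((\<gamma> / lam) *\<^sub>R v)"
      define v' where "v' = (lam / \<gamma>) *\<^sub>R (y - prox (\<lambda>z. ereal (\<gamma> / lam) * f1 z) y)"
      define x' where "x' = xh - \<gamma> *\<^sub>R (transpose B *v v')"
      have st: "AL (fun_upd \<omega> k i) (k + 1) = (x', v')"
        unfolding step alg_step_def Let_def x'_def v'_def y_def xh_def \<gamma>_def by simp
      define xhs where "xhs = xs - \<gamma> *\<^sub>R gf2 xs"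
      define w where "w = (lam / \<gamma>) *\<^sub>R (B *v xhs) + (mat 1 - lam *\<^sub>R (B ** transpose B)) *v vs"
      have vsw: "vs = w - prox (\<lambda>z. ereal (lam / \<gamma>) * f1 ((\<gamma> / lam) *\<^sub>R z)) w"
        using vs_fix[OF k1] unfolding Let_def w_def xhs_def \<gamma>_def .
      have xsx: "xs = xhs - \<gamma> *\<^sub>R (transpose B *v vs)"
        using xs_fix[OF k1] unfolding xhs_def \<gamma>_def by simp
      have core: "(norm (x' - xs))\<^sup>2 + \<gamma>\<^sup>2 / lam * (norm (v' - vs))\<^sup>2
         \<le> (norm (xh - xhs))\<^sup>2 + \<gamma>\<^sup>2 / lam * \<kappa> * (norm (v - vs))\<^sup>2"
        by (rule step_core[OF f1 lam gp psd kap y_def v'_def x'_def w_def vsw xsx])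
      have "\<gamma>'\<^sup>2 / lam * (norm (v' - vs))\<^sup>2 \<le> \<gamma>\<^sup>2 / lam * (norm (v' - vs))\<^sup>2"
        using g'g g'p lam by (intro mult_right_mono divide_right_mono power_mono) auto
      moreover have "\<gamma>\<^sup>2 / lam * \<kappa> * (norm (v - vs))\<^sup>2 \<le> B0 * Vn \<omega>"
      proof -
        have "\<gamma>\<^sup>2 / lam * \<kappa> \<le> \<gamma>\<^sup>2 / lam * (1 - \<nu> * \<gamma>)" using kapg lam by (intro mult_left_mono) auto
        then show ?thesis unfolding B0_def Vn_def v_def[symmetric] by (intro mult_right_mono) auto
      qed
      moreover have "xh - xhs = u - \<gamma> *\<^sub>R e i"
        by (simp add: xh_def xhs_def u_def e_def algebra_simps)
      ultimately show ?thesis using core st unfolding \<Phi>_def by simp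
    qed
    have "(\<Sum>i\<in>{1..N}. \<Phi> (fun_upd \<omega> k i)) \<le> (\<Sum>i\<in>{1..N}. (norm (u - \<gamma> *\<^sub>R e i))\<^sup>2 + B0 * Vn \<omega>)"
      by (rule sum_mono) (rule one)
    also have "\<dots> = real N * (norm u)\<^sup>2 + \<gamma>\<^sup>2 * (\<Sum>i\<in>{1..N}. (norm (e i))\<^sup>2) + real N * (B0 * Vn \<omega>)"
      using sum_sq_centered[of e "{1..N}" u \<gamma>] bsum[of x] by (simp add: sum.distrib e_def)
    finally have S: "(\<Sum>i\<in>{1..N}. \<Phi> (fun_upd \<omega> k i)) / real N
        \<le> (norm u)\<^sup>2 + \<gamma>\<^sup>2 * ((\<Sum>i\<in>{1..N}. (norm (e i))\<^sup>2) / real N) + B0 * Vn \<omega>"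
      using N1 by (simp add: divide_simps) (simp add: algebra_simps)
    have "(norm u)\<^sup>2 \<le> A * Dn \<omega>"
      unfolding u_def A_def Dn_def x_def[symmetric]
      by (rule primal[OF deriv \<nu>(2) \<nu>(1) \<beta> C(1) gp hg1])
    then show ?thesis using S by (simp add: Er_i)
  qed
  have Xle: "Xn \<omega> \<le> 2 * Dn \<omega> + 2 * (norm xs)\<^sup>2" for \<omega>
    using sq_le[of "fst (AL \<omega> k) - xs" xs] by (simp add: Xn_def Dn_def)
  have aK1: "Ek n p (k + 1) \<Phi> \<le> A * Ek n p k Dn + \<gamma>\<^sup>2 * Ek n p (k + 1) Er + B0 * Ek n p k Vn"
  proof -
    have "Ek n p (k + 1) \<Phi> = Ek n p k (\<lambda>\<omega>. (\<Sum>i\<in>{1..N}. \<Phi> (fun_upd \<omega> k i)) / real N)"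
      unfolding N_def by (rule Ek_split[OF N1' k1])
    also have "\<dots> \<le> Ek n p k (\<lambda>\<omega>. A * Dn \<omega> + \<gamma>\<^sup>2 * ((\<Sum>i\<in>{1..N}. Er (fun_upd \<omega> k i)) / real N) + B0 * Vn \<omega>)"
      by (rule Ek_mono[OF N1' pw])
    also have "\<dots> = A * Ek n p k Dn + \<gamma>\<^sup>2 * Ek n p k (\<lambda>\<omega>. (\<Sum>i\<in>{1..N}. Er (fun_upd \<omega> k i)) / real N) + B0 * Ek n p k Vn"
      by (simp only: Ek_add[OF N1'] Ek_cmult)
    also have "Ek n p k (\<lambda>\<omega>. (\<Sum>i\<in>{1..N}. Er (fun_upd \<omega> k i)) / real N) = Ek n p (k + 1) Er"
      unfolding N_def by (rule Ek_split[OF N1' k1, symmetric])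
    finally show ?thesis .
  qed
  have vb: "Ek n p (k + 1) Er \<le> C1 * Ek n p k Xn + C2"
    using var_bound[OF k1] unfolding Er_def Xn_def AL_def .
  have xb: "Ek n p k Xn \<le> 2 * Ek n p k Dn + 2 * (norm xs)\<^sup>2"
  proof -
    have "Ek n p k Xn \<le> Ek n p k (\<lambda>\<omega>. 2 * Dn \<omega> + 2 * (norm xs)\<^sup>2)" by (rule Ek_mono[OF N1' Xle])
    also have "\<dots> = 2 * Ek n p k Dn + 2 * (norm xs)\<^sup>2" by (simp add: Ek_add[OF N1'] Ek_cmult Ek_const)
    finally show ?thesis .
  qed
  have ak: "Ek n p k (\<lambda>\<omega>. Dn \<omega> + \<gamma>\<^sup>2 / lam * Vn \<omega>) = Ek n p k Dn + \<gamma>\<^sup>2 / lam * Ek n p k Vn"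
    by (simp only: Ek_add[OF N1'] Ek_cmult)
  have g2: "\<gamma>\<^sup>2 \<ge> 0" by simp
  have fin: "A * Ek n p k Dn + \<gamma>\<^sup>2 * Ek n p (k + 1) Er + B0 * Ek n p k Vn
      \<le> (1 - \<nu> * \<gamma>) * (Ek n p k Dn + \<gamma>\<^sup>2 / lam * Ek n p k Vn) + \<gamma>\<^sup>2 * (4 * C1 * (norm xs)\<^sup>2 + 2 * C2)"
  proof -
    have "\<gamma>\<^sup>2 * Ek n p (k + 1) Er \<le> \<gamma>\<^sup>2 * (C1 * (2 * Ek n p k Dn + 2 * (norm xs)\<^sup>2) + C2)"
      using vb xb C(1) by (intro mult_left_mono) (auto intro: order_trans)
    moreover have "\<gamma>\<^sup>2 * (C1 * (norm xs)\<^sup>2 * 2 + C2) \<le> \<gamma>\<^sup>2 * (4 * C1 * (norm xs)\<^sup>2 + 2 * C2)"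
      using C by (intro mult_left_mono) auto
    ultimately show ?thesis
      by (simp add: A_def B0_def algebra_simps)
  qed
  show "let a = (\<lambda>k. Ek n p k (\<lambda>\<omega>. (norm (fst (alg f1 B p g\<phi> c \<alpha> lam x1 v1 \<omega> k) - xs))\<^sup>2
                  + (stepsize c \<alpha> k)\<^sup>2 / lam * (norm (snd (alg f1 B p g\<phi> c \<alpha> lam x1 v1 \<omega> k) - vs))\<^sup>2));
          M1 = 4 * C1 * (norm xs)\<^sup>2 + 2 * C2
      in a (k + 1) \<le> (1 - \<nu> * stepsize c \<alpha> k) * a k + (stepsize c \<alpha> k)\<^sup>2 * M1"
    unfolding Let_def
    using aK1 fin ak unfolding \<Phi>_def Dn_def Vn_def AL_def \<gamma>_def \<gamma>'_def by simp
qed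

end
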